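(* Let $D$ be a domain, $R=D[X_1,\dots,X_n]$ with $n\ge2$, and suppose that $\mathcal I(R)$ is a BF-monoid. Then the following ideals are atoms of $\mathcal I(R)$: \begin{enumerate} \item $\mathfrak b_i(X_1,X_2)$ for every $i\in\mathbb N$; \item $\mathfrak c_{2i+1}(X_1,X_2)$ for every $i\in\mathbb N$; \item $\mathfrak c_{2i}(X_1,X_2)$ for every $i\in\mathbb N_{\ge3}$; \item $\mathfrak c'(X_1,X_2)=\langle X_1^3+X_2^3,\,X_1^2X_2,\,X_1X_2^2\rangle$. \end{enumerate}
   Context: $\mathcal I(R)$ is the semigroup of nonzero ideals of $R$ under multiplication; an atom is a non-unit (i.e., an ideal $\ne R$) $\mathfrak a$ such that $\mathfrak a=IJ$ with $I,J\in\mathcal I(R)$ implies $I=R$ or $J=R$. BF-monoid: unit-cancellative and every element has finitely many (and at least one) lengths of factorizations into atoms. Ideals: $\mathfrak b_i(X_1,X_2)=\langle X_1^i,X_2^i\rangle$; $\mathfrak c_{2i+1}(X_1,X_2)$ is generated by the monomials $X_1^{2i+1-t}X_2^t$ with $t\in\{0,1,3,5,\dots,2i+1\}$; $\mathfrak c_{2i}(X_1,X_2)$ is generated by the monomials $X_1^{2i-t}X_2^t$ with $t\in\{0,1,2,4,6,\dots,2i\}$. *)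

theory Defs
  imports Main "HOL-Library.Poly_Mapping" "HOL-Library.Cardinality"
begin

text \<open>Polynomial ring D[X_v : v in 'v] over a commutative ring, realised as finitely
supported functions from monomials ('v =>0 nat) to coefficients.\<close>
type_synonym ('v,'a) mpoly = "('v \<Rightarrow>\<^sub>0 nat) \<Rightarrow>\<^sub>0 'a"

definition Var :: "'v \<Rightarrow> ('v,'a::comm_ring_1) mpoly" where
  "Var v = Poly_Mapping.single (Poly_Mapping.single v 1) 1"

definition is_ideal :: "'r::comm_ring_1 set \<Rightarrow> bool" where
  "is_ideal I \<longleftrightarrow> 0 \<in> I \<and> (\<forall>a\<in>I. \<forall>b\<in>I. a + b \<in> I) \<and> (\<forall>r. \<forall>a\<in>I. r * a \<in> I)"

definition ideal_gen :: "'r::comm_ring_1 set \<Rightarrow> 'r set" where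
  "ideal_gen S = \<Inter>{I. is_ideal I \<and> S \<subseteq> I}"

definition ideal_mult :: "'r::comm_ring_1 set \<Rightarrow> 'r set \<Rightarrow> 'r set" where
  "ideal_mult I J = ideal_gen {a * b | a b. a \<in> I \<and> b \<in> J}"

text \<open>Elements of the monoid I(R): nonzero ideals.\<close>
definition nz_ideal :: "'r::comm_ring_1 set \<Rightarrow> bool" where
  "nz_ideal I \<longleftrightarrow> is_ideal I \<and> I \<noteq> {0}"

definition ideal_unit :: "'r::comm_ring_1 set \<Rightarrow> bool" where
  "ideal_unit U \<longleftrightarrow> nz_ideal U \<and> (\<exists>J. nz_ideal J \<and> ideal_mult U J = UNIV)"

definition ideal_atom :: "'r::comm_ring_1 set \<Rightarrow> bool" where
  "ideal_atom A \<longleftrightarrow> nz_ideal A \<and> A \<noteq> UNIV \<and>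
     (\<forall>I J. nz_ideal I \<longrightarrow> nz_ideal J \<longrightarrow> A = ideal_mult I J \<longrightarrow> I = UNIV \<or> J = UNIV)"

definition ideal_unit_cancellative :: "'r::comm_ring_1 itself \<Rightarrow> bool" where
  "ideal_unit_cancellative _ \<longleftrightarrow>
     (\<forall>A U :: 'r set. nz_ideal A \<longrightarrow> nz_ideal U \<longrightarrow>
        (ideal_mult A U = A \<or> ideal_mult U A = A) \<longrightarrow> ideal_unit U)"

text \<open>Set of lengths L(A): lengths of factorizations of A into atoms
  (the empty product being R).\<close>
definition ideal_lengths :: "'r::comm_ring_1 set \<Rightarrow> nat set" where
  "ideal_lengths A = {length xs | xs. (\<forall>x\<in>set xs. ideal_atom x) \<and> A = foldr ideal_mult xs UNIV}"

definition ideal_BF :: "'r::comm_ring_1 itself \<Rightarrow> bool" where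
  "ideal_BF T \<longleftrightarrow> ideal_unit_cancellative T \<and>
     (\<forall>A :: 'r set. nz_ideal A \<longrightarrow> ideal_lengths A \<noteq> {} \<and> finite (ideal_lengths A))"

definition b_ideal :: "nat \<Rightarrow> 'v \<Rightarrow> 'v \<Rightarrow> ('v,'a::comm_ring_1) mpoly set" where
  "b_ideal i x1 x2 = ideal_gen {Var x1 ^ i, Var x2 ^ i}"

definition c_odd_ideal :: "nat \<Rightarrow> 'v \<Rightarrow> 'v \<Rightarrow> ('v,'a::comm_ring_1) mpoly set" where
  "c_odd_ideal i x1 x2 = ideal_gen {Var x1 ^ (2*i+1-t) * Var x2 ^ t | t.
      t \<in> {0, 1} \<union> {t. odd t \<and> t \<le> 2*i+1}}"

definition c_even_ideal :: "nat \<Rightarrow> 'v \<Rightarrow> 'v \<Rightarrow> ('v,'a::comm_ring_1) mpoly set" where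
  "c_even_ideal i x1 x2 = ideal_gen {Var x1 ^ (2*i-t) * Var x2 ^ t | t.
      t \<in> {0, 1} \<union> {t. even t \<and> t \<le> 2*i}}"

definition c'_ideal :: "'v \<Rightarrow> 'v \<Rightarrow> ('v,'a::comm_ring_1) mpoly set" where
  "c'_ideal x1 x2 = ideal_gen {Var x1 ^ 3 + Var x2 ^ 3, Var x1 ^ 2 * Var x2, Var x1 * Var x2 ^ 2}"

end

theory Submission
  imports Defs
begin

abbreviation lookup where "lookup \<equiv> Poly_Mapping.lookup"
abbreviation keys where "keys \<equiv> Poly_Mapping.keys"
abbreviation single where "single \<equiv> Poly_Mapping.single"

section \<open>Restriction of poly mappings\<close>

definition restr :: "('k \<Rightarrow> bool) \<Rightarrow> ('k \<Rightarrow>\<^sub>0 'a::zero) \<Rightarrow> ('k \<Rightarrow>\<^sub>0 'a)" where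
  "restr P f = Abs_poly_mapping (\<lambda>m. if P m then lookup f m else 0)"

lemma lookup_restr: "lookup (restr P f) m = (if P m then lookup f m else 0)"
proof -
  have "finite {m. (if P m then lookup f m else 0) \<noteq> 0}"
    by (rule finite_subset[of _ "{m. lookup f m \<noteq> 0}"]) auto
  then show ?thesis unfolding restr_def by simp
qed

lemma keys_restr: "keys (restr P f) = {m \<in> keys f. P m}"
  by (auto simp: in_keys_iff lookup_restr split: if_splits)

lemma restr_add: "restr P (f + g) = restr P f + restr P (g::'k \<Rightarrow>\<^sub>0 'a::monoid_add)"
  by (rule poly_mapping_eqI) (simp add: lookup_restr lookup_add)

lemma restr_diff: "restr P (f - g) = restr P f - restr P (g::'k \<Rightarrow>\<^sub>0 'a::ab_group_add)"
  by (rule poly_mapping_eqI) (simp add: lookup_restr lookup_minus)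

lemma restr_zero[simp]: "restr P 0 = 0"
  by (rule poly_mapping_eqI) (simp add: lookup_restr)

lemma restr_id: "(\<And>m. m \<in> keys f \<Longrightarrow> P m) \<Longrightarrow> restr P f = f"
  by (rule poly_mapping_eqI) (auto simp: lookup_restr in_keys_iff)

lemma restr_none: "(\<And>m. m \<in> keys f \<Longrightarrow> \<not> P m) \<Longrightarrow> restr P f = 0"
  by (rule poly_mapping_eqI) (auto simp: lookup_restr in_keys_iff)

lemma restr_split: "f = restr P f + restr (\<lambda>m. \<not> P m) (f::'k \<Rightarrow>\<^sub>0 'a::monoid_add)"
  by (rule poly_mapping_eqI) (simp add: lookup_restr lookup_add)

lemma restr_restr: "restr P (restr Q f) = restr (\<lambda>m. P m \<and> Q m) f"
  by (rule poly_mapping_eqI) (simp add: lookup_restr)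

lemma keys_mult_sub:
  "m \<in> keys (f * g) \<Longrightarrow> \<exists>a b. a \<in> keys f \<and> b \<in> keys g \<and> m = a + b"
  using keys_mult[of f g] by blast

section \<open>Additive gradings\<close>

definition additive :: "('k::monoid_add \<Rightarrow> nat) \<Rightarrow> bool" where
  "additive w \<longleftrightarrow> (\<forall>a b. w (a + b) = w a + w b)"

lemma keys_mult_w:
  assumes "additive w" "m \<in> keys (f * g)"
  obtains a b where "a \<in> keys f" "b \<in> keys g" "w m = w a + w b"
  using keys_mult_sub[OF assms(2)] assms(1) unfolding additive_def by blast

lemma restr_eq_sum:
  fixes F G :: "'k::monoid_add \<Rightarrow>\<^sub>0 'a::comm_ring_1"
  assumes "\<And>m. m \<in> keys F \<Longrightarrow> P m" "\<And>m. m \<in> keys G \<Longrightarrow> \<not> P m"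
  shows "restr P (F + G) = F"
  using assms by (simp add: restr_add restr_id restr_none)

lemma kmw_eq:
  assumes "additive w" "m \<in> keys (F * G)" "\<And>x. x \<in> keys F \<Longrightarrow> w x = a" "\<And>y. y \<in> keys G \<Longrightarrow> w y = b"
  shows "w m = a + b"
proof -
  obtain x y where "x \<in> keys F" "y \<in> keys G" "w m = w x + w y" by (rule keys_mult_w[OF assms(1,2)])
  then show ?thesis using assms(3,4) by simp
qed

lemma kmw_ge:
  assumes "additive w" "m \<in> keys (F * G)" "\<And>x. x \<in> keys F \<Longrightarrow> a \<le> w x" "\<And>y. y \<in> keys G \<Longrightarrow> b \<le> w y"
  shows "a + b \<le> w m"
proof -
  obtain x y where "x \<in> keys F" "y \<in> keys G" "w m = w x + w y" by (rule keys_mult_w[OF assms(1,2)])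
  then show ?thesis using assms(3,4) add_mono by fastforce
qed

lemma kmw_le:
  assumes "additive w" "m \<in> keys (F * G)" "\<And>x. x \<in> keys F \<Longrightarrow> w x \<le> a" "\<And>y. y \<in> keys G \<Longrightarrow> w y \<le> b"
  shows "w m \<le> a + b"
proof -
  obtain x y where "x \<in> keys F" "y \<in> keys G" "w m = w x + w y" by (rule keys_mult_w[OF assms(1,2)])
  then show ?thesis using assms(3,4) add_mono by fastforce
qed

lemma keys_add_cases:
  assumes "m \<in> keys (F + G)"
  shows "m \<in> keys F \<or> m \<in> keys G"
  using keys_add[of F G] assms by blast

lemma G_lo:
  fixes f g :: "'k::comm_monoid_add \<Rightarrow>\<^sub>0 'a::comm_ring_1"
  assumes w: "additive w"
    and f: "\<And>m. m \<in> keys f \<Longrightarrow> a \<le> w m"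
    and g: "\<And>m. m \<in> keys g \<Longrightarrow> b \<le> w m"
  shows "restr (\<lambda>m. w m = a + b) (f * g) = restr (\<lambda>m. w m = a) f * restr (\<lambda>m. w m = b) g"
proof -
  define F0 where "F0 = restr (\<lambda>m. w m = a) f"
  define F1 where "F1 = restr (\<lambda>m. \<not> w m = a) f"
  define G0 where "G0 = restr (\<lambda>m. w m = b) g"
  define G1 where "G1 = restr (\<lambda>m. \<not> w m = b) g"
  have fs: "f = F0 + F1" unfolding F0_def F1_def by (rule restr_split)
  have gs: "g = G0 + G1" unfolding G0_def G1_def by (rule restr_split)
  have kF0: "w m = a" if "m \<in> keys F0" for m using that by (auto simp: F0_def keys_restr)
  have kF1: "w m \<ge> a + 1" if "m \<in> keys F1" for m using that f by (force simp: F1_def keys_restr)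
  have kG0: "w m = b" if "m \<in> keys G0" for m using that by (auto simp: G0_def keys_restr)
  have kG1: "w m \<ge> b + 1" if "m \<in> keys G1" for m using that g by (force simp: G1_def keys_restr)
  have eq: "f * g = F0 * G0 + (F0 * G1 + F1 * g)"
    by (simp add: fs gs algebra_simps)
  have k1: "\<And>m. m \<in> keys (F0 * G0) \<Longrightarrow> w m = a + b"
    using kmw_eq[OF w _ kF0 kG0] by blast
  have k2: "\<And>m. m \<in> keys (F0 * G1 + F1 * g) \<Longrightarrow> \<not> w m = a + b"
  proof -
    fix m assume "m \<in> keys (F0 * G1 + F1 * g)"
    then have "m \<in> keys (F0 * G1) \<or> m \<in> keys (F1 * g)" by (rule keys_add_cases)
    then show "\<not> w m = a + b"
    proof
      assume "m \<in> keys (F0 * G1)"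
      from kmw_ge[OF w this, of a "b+1"] kF0 kG1 show ?thesis by fastforce
    next
      assume "m \<in> keys (F1 * g)"
      from kmw_ge[OF w this, of "a+1" b] kF1 g show ?thesis by fastforce
    qed
  qed
  have "restr (\<lambda>m. w m = a + b) (f * g) = F0 * G0" unfolding eq by (rule restr_eq_sum[OF k1 k2])
  then show ?thesis by (simp only: F0_def G0_def)
qed

lemma G_const:
  fixes s f :: "'k::comm_monoid_add \<Rightarrow>\<^sub>0 'a::comm_ring_1"
  assumes w: "additive w"
    and s: "\<And>m. m \<in> keys s \<Longrightarrow> w m = c"
  shows "restr (\<lambda>m. w m = c + k) (s * f) = s * restr (\<lambda>m. w m = k) f"
proof -
  define F0 where "F0 = restr (\<lambda>m. w m = k) f"
  define F1 where "F1 = restr (\<lambda>m. \<not> w m = k) f"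
  have fs: "f = F0 + F1" unfolding F0_def F1_def by (rule restr_split)
  have eq: "s * f = s * F0 + s * F1" by (simp add: fs algebra_simps)
  have kF0: "w m = k" if "m \<in> keys F0" for m using that by (auto simp: F0_def keys_restr)
  have k1: "\<And>m. m \<in> keys (s * F0) \<Longrightarrow> w m = c + k"
    using kmw_eq[OF w _ s kF0] by blast
  have k2: "\<And>m. m \<in> keys (s * F1) \<Longrightarrow> \<not> w m = c + k"
  proof -
    fix m assume m: "m \<in> keys (s * F1)"
    obtain x y where "x \<in> keys s" "y \<in> keys F1" "w m = w x + w y" by (rule keys_mult_w[OF w m])
    then show "\<not> w m = c + k" using s by (auto simp: F1_def keys_restr)
  qed
  have "restr (\<lambda>m. w m = c + k) (s * f) = s * F0" unfolding eq by (rule restr_eq_sum[OF k1 k2])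
  then show ?thesis by (simp only: F0_def)
qed

lemma G_lo1:
  fixes f g :: "'k::comm_monoid_add \<Rightarrow>\<^sub>0 'a::comm_ring_1"
  assumes w: "additive w"
    and f: "\<And>m. m \<in> keys f \<Longrightarrow> a \<le> w m"
    and g: "\<And>m. m \<in> keys g \<Longrightarrow> b \<le> w m"
  shows "restr (\<lambda>m. w m = a + b + 1) (f * g) =
     restr (\<lambda>m. w m = a) f * restr (\<lambda>m. w m = b + 1) g + restr (\<lambda>m. w m = a + 1) f * restr (\<lambda>m. w m = b) g"
proof -
  define F0 where "F0 = restr (\<lambda>m. w m = a) f"
  define F1 where "F1 = restr (\<lambda>m. w m = a + 1) f"
  define F2 where "F2 = restr (\<lambda>m. \<not> w m = a \<and> \<not> w m = a + 1) f"
  define G0 where "G0 = restr (\<lambda>m. w m = b) g"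
  define G1 where "G1 = restr (\<lambda>m. w m = b + 1) g"
  define G2 where "G2 = restr (\<lambda>m. \<not> w m = b \<and> \<not> w m = b + 1) g"
  have fs: "f = F0 + F1 + F2"
    by (rule poly_mapping_eqI) (simp add: F0_def F1_def F2_def lookup_restr lookup_add)
  have gs: "g = G0 + G1 + G2"
    by (rule poly_mapping_eqI) (simp add: G0_def G1_def G2_def lookup_restr lookup_add)
  have kF0: "w m = a" if "m \<in> keys F0" for m using that by (auto simp: F0_def keys_restr)
  have kF1: "w m = a + 1" if "m \<in> keys F1" for m using that by (auto simp: F1_def keys_restr)
  have kF2: "w m \<ge> a + 2" if "m \<in> keys F2" for m using that f by (force simp: F2_def keys_restr)
  have kG0: "w m = b" if "m \<in> keys G0" for m using that by (auto simp: G0_def keys_restr)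
  have kG1: "w m = b + 1" if "m \<in> keys G1" for m using that by (auto simp: G1_def keys_restr)
  have kG2: "w m \<ge> b + 2" if "m \<in> keys G2" for m using that g by (force simp: G2_def keys_restr)
  have eq: "f * g = (F0 * G1 + F1 * G0) + (F0 * G0 + (F0 * G2 + F1 * G1 + F1 * G2 + F2 * g))"
    by (simp add: fs gs algebra_simps)
  have k1: "\<And>m. m \<in> keys (F0 * G1 + F1 * G0) \<Longrightarrow> w m = a + b + 1"
  proof -
    fix m assume "m \<in> keys (F0 * G1 + F1 * G0)"
    then have "m \<in> keys (F0 * G1) \<or> m \<in> keys (F1 * G0)" by (rule keys_add_cases)
    then show "w m = a + b + 1"
    proof
      assume "m \<in> keys (F0 * G1)" from kmw_eq[OF w this kF0 kG1] show ?thesis by simp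
    next
      assume "m \<in> keys (F1 * G0)" from kmw_eq[OF w this kF1 kG0] show ?thesis by simp
    qed
  qed
  have k2: "\<And>m. m \<in> keys (F0 * G0 + (F0 * G2 + F1 * G1 + F1 * G2 + F2 * g)) \<Longrightarrow> \<not> w m = a + b + 1"
  proof -
    fix m assume "m \<in> keys (F0 * G0 + (F0 * G2 + F1 * G1 + F1 * G2 + F2 * g))"
    then have "m \<in> keys (F0 * G0) \<or> m \<in> keys (F0 * G2) \<or> m \<in> keys (F1 * G1) \<or> m \<in> keys (F1 * G2) \<or> m \<in> keys (F2 * g)"
      by (meson keys_add_cases)
    then show "\<not> w m = a + b + 1"
    proof (elim disjE)
      assume "m \<in> keys (F0 * G0)" from kmw_eq[OF w this kF0 kG0] show ?thesis by simp
    next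
      assume "m \<in> keys (F0 * G2)" from kmw_ge[OF w this, of a "b+2"] kF0 kG2 show ?thesis by fastforce
    next
      assume "m \<in> keys (F1 * G1)" from kmw_eq[OF w this kF1 kG1] show ?thesis by simp
    next
      assume "m \<in> keys (F1 * G2)" from kmw_ge[OF w this, of "a+1" "b+2"] kF1 kG2 show ?thesis by fastforce
    next
      assume "m \<in> keys (F2 * g)" from kmw_ge[OF w this, of "a+2" b] kF2 g show ?thesis by fastforce
    qed
  qed
  have "restr (\<lambda>m. w m = a + b + 1) (f * g) = F0 * G1 + F1 * G0" unfolding eq by (rule restr_eq_sum[OF k1 k2])
  then show ?thesis by (simp only: F0_def F1_def G0_def G1_def)
qed


section \<open>Lowest degree\<close>

definition lo :: "('k \<Rightarrow> nat) \<Rightarrow> ('k \<Rightarrow>\<^sub>0 'a::zero) \<Rightarrow> nat" where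
  "lo w f = Min (w ` keys f)"

lemma lo_le: "m \<in> keys f \<Longrightarrow> lo w f \<le> w m"
  unfolding lo_def by (simp add: Min_le)

lemma lo_ex: "f \<noteq> 0 \<Longrightarrow> \<exists>m\<in>keys f. w m = lo w f"
proof -
  assume "f \<noteq> 0"
  then have "keys f \<noteq> {}" by simp
  then have "Min (w ` keys f) \<in> w ` keys f" by (intro Min_in) auto
  then show ?thesis unfolding lo_def by auto
qed

lemma restr_ne0: "m \<in> keys f \<Longrightarrow> P m \<Longrightarrow> restr P f \<noteq> 0"
  by (metis (mono_tags, lifting) keys_restr keys_zero mem_Collect_eq empty_iff)

lemma restr_lo_ne: "f \<noteq> 0 \<Longrightarrow> restr (\<lambda>m. w m = lo w f) f \<noteq> 0"
proof -
  assume "f \<noteq> 0"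
  then obtain m where "m \<in> keys f" "w m = lo w f" using lo_ex by blast
  then show ?thesis by (rule restr_ne0)
qed

lemma lo_eqI:
  assumes "\<And>m. m \<in> keys f \<Longrightarrow> a \<le> w m" "restr (\<lambda>m. w m = a) f \<noteq> 0"
  shows "lo w f = a"
proof -
  from assms(2) obtain m where m: "m \<in> keys f" "w m = a"
    by (metis (mono_tags, lifting) restr_none)
  have "f \<noteq> 0" using m by auto
  then obtain m' where "m' \<in> keys f" "w m' = lo w f" using lo_ex by metis
  then show ?thesis using lo_le[OF m(1), of w] assms(1) m by fastforce
qed

lemma restr_below_lo: "k < lo w f \<Longrightarrow> restr (\<lambda>m. w m = k) f = 0"
proof (rule restr_none)
  fix m assume "k < lo w f" "m \<in> keys f"
  then show "\<not> w m = k" using lo_le[of m f w] by simp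
qed

lemma restr_ne0_imp: "restr P f \<noteq> 0 \<Longrightarrow> \<exists>m\<in>keys f. P m"
  by (metis restr_none)

section \<open>No zero divisors\<close>

lemma additive_lookup: "additive (\<lambda>m::'v \<Rightarrow>\<^sub>0 nat. lookup m v)"
  unfolding additive_def by (simp add: lookup_add)

lemma single_ne0: "c \<noteq> 0 \<Longrightarrow> single k c \<noteq> 0"
  by (metis lookup_single_eq lookup_zero)

lemma dom_aux:
  fixes vs :: "'v list"
  shows "\<forall>f g :: ('v \<Rightarrow>\<^sub>0 nat) \<Rightarrow>\<^sub>0 'a::idom. f \<noteq> 0 \<longrightarrow> g \<noteq> 0 \<longrightarrow>
     (\<forall>v. v \<notin> set vs \<longrightarrow> (\<forall>m\<in>keys f. \<forall>m'\<in>keys f. lookup m v = lookup m' v)) \<longrightarrow>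
     (\<forall>v. v \<notin> set vs \<longrightarrow> (\<forall>m\<in>keys g. \<forall>m'\<in>keys g. lookup m v = lookup m' v)) \<longrightarrow> f * g \<noteq> 0"
proof (induction vs)
  case Nil
  have single: "\<exists>m0. f = single m0 (lookup f m0) \<and> lookup f m0 \<noteq> 0"
    if nz: "f \<noteq> 0" and hv: "\<forall>v. \<forall>m\<in>keys f. \<forall>m'\<in>keys f. lookup m v = lookup m' v"
    for f :: "('v \<Rightarrow>\<^sub>0 nat) \<Rightarrow>\<^sub>0 'a"
  proof -
    obtain m0 where m0: "m0 \<in> keys f" using nz by (metis ex_in_conv keys_eq_empty)
    have eq: "m = m0" if "m \<in> keys f" for m
      by (rule poly_mapping_eqI) (use that m0 hv in blast)
    have "f = single m0 (lookup f m0)"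
    proof (rule poly_mapping_eqI)
      fix k show "lookup f k = lookup (single m0 (lookup f m0)) k"
      proof (cases "k = m0")
        case False
        then have "k \<notin> keys f" using eq by blast
        then show ?thesis using False by (simp add: lookup_single when_def in_keys_iff)
      qed simp
    qed
    then show ?thesis using m0 by (auto simp: in_keys_iff)
  qed
  show ?case
  proof (intro allI impI)
    fix f g :: "('v \<Rightarrow>\<^sub>0 nat) \<Rightarrow>\<^sub>0 'a"
    assume a: "f \<noteq> 0" "g \<noteq> 0" and
      hf: "\<forall>v. v \<notin> set [] \<longrightarrow> (\<forall>m\<in>keys f. \<forall>m'\<in>keys f. lookup m v = lookup m' v)" and
      hg: "\<forall>v. v \<notin> set [] \<longrightarrow> (\<forall>m\<in>keys g. \<forall>m'\<in>keys g. lookup m v = lookup m' v)"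
    have hf': "\<forall>v. \<forall>m\<in>keys f. \<forall>m'\<in>keys f. lookup m v = lookup m' v"
    proof (intro allI ballI)
      fix v m m' assume "m \<in> keys f" "m' \<in> keys f"
      moreover have "v \<notin> set ([] :: 'v list)" by simp
      ultimately show "lookup m v = lookup m' v" using hf by blast
    qed
    have hg': "\<forall>v. \<forall>m\<in>keys g. \<forall>m'\<in>keys g. lookup m v = lookup m' v"
    proof (intro allI ballI)
      fix v m m' assume "m \<in> keys g" "m' \<in> keys g"
      moreover have "v \<notin> set ([] :: 'v list)" by simp
      ultimately show "lookup m v = lookup m' v" using hg by blast
    qed
    obtain m0 where m0: "f = single m0 (lookup f m0)" "lookup f m0 \<noteq> 0" using single[OF a(1) hf'] by blast
    obtain n0 where n0: "g = single n0 (lookup g n0)" "lookup g n0 \<noteq> 0" using single[OF a(2) hg'] by blast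
    have "f * g = single (m0 + n0) (lookup f m0 * lookup g n0)"
      by (subst m0(1), subst n0(1), rule mult_single)
    moreover have "lookup f m0 * lookup g n0 \<noteq> 0" using m0(2) n0(2) by simp
    ultimately show "f * g \<noteq> 0" using single_ne0 by metis
  qed
next
  case (Cons v vs)
  show ?case
  proof (intro allI impI)
    fix f g :: "('v \<Rightarrow>\<^sub>0 nat) \<Rightarrow>\<^sub>0 'a"
    assume a: "f \<noteq> 0" "g \<noteq> 0" and
      hf: "\<forall>u. u \<notin> set (v # vs) \<longrightarrow> (\<forall>m\<in>keys f. \<forall>m'\<in>keys f. lookup m u = lookup m' u)" and
      hg: "\<forall>u. u \<notin> set (v # vs) \<longrightarrow> (\<forall>m\<in>keys g. \<forall>m'\<in>keys g. lookup m u = lookup m' u)"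
    define w where "w = (\<lambda>m::'v \<Rightarrow>\<^sub>0 nat. lookup m v)"
    have w: "additive w" unfolding w_def by (rule additive_lookup)
    define F where "F = restr (\<lambda>m. w m = lo w f) f"
    define G where "G = restr (\<lambda>m. w m = lo w g) g"
    have F0: "F \<noteq> 0" unfolding F_def by (rule restr_lo_ne[OF a(1)])
    have G0: "G \<noteq> 0" unfolding G_def by (rule restr_lo_ne[OF a(2)])
    have hF: "\<forall>u. u \<notin> set vs \<longrightarrow> (\<forall>m\<in>keys F. \<forall>m'\<in>keys F. lookup m u = lookup m' u)"
    proof (intro allI impI ballI)
      fix u m m' assume u: "u \<notin> set vs" and mm: "m \<in> keys F" "m' \<in> keys F"
      show "lookup m u = lookup m' u"
      proof (cases "u = v")
        case True then show ?thesis using mm by (simp add: F_def keys_restr w_def)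
      next
        case False then show ?thesis using mm u hf by (simp add: F_def keys_restr)
      qed
    qed
    have hG: "\<forall>u. u \<notin> set vs \<longrightarrow> (\<forall>m\<in>keys G. \<forall>m'\<in>keys G. lookup m u = lookup m' u)"
    proof (intro allI impI ballI)
      fix u m m' assume u: "u \<notin> set vs" and mm: "m \<in> keys G" "m' \<in> keys G"
      show "lookup m u = lookup m' u"
      proof (cases "u = v")
        case True then show ?thesis using mm by (simp add: G_def keys_restr w_def)
      next
        case False then show ?thesis using mm u hg by (simp add: G_def keys_restr)
      qed
    qed
    have "F * G \<noteq> 0" using Cons.IH F0 G0 hF hG by blast
    moreover have "restr (\<lambda>m. w m = lo w f + lo w g) (f * g) = F * G"
      unfolding F_def G_def by (rule G_lo[OF w]) (auto intro: lo_le)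
    ultimately show "f * g \<noteq> 0" by auto
  qed
qed

lemma mult_ne0:
  fixes f g :: "('v::finite \<Rightarrow>\<^sub>0 nat) \<Rightarrow>\<^sub>0 'a::idom"
  assumes "f \<noteq> 0" "g \<noteq> 0"
  shows "f * g \<noteq> 0"
proof -
  obtain vs :: "'v list" where "set vs = UNIV" using finite_list[of "UNIV :: 'v set"] by auto
  then show ?thesis using dom_aux[of vs] assms by auto
qed

lemma mult_eq0_iff:
  fixes f g :: "('v::finite \<Rightarrow>\<^sub>0 nat) \<Rightarrow>\<^sub>0 'a::idom"
  shows "f * g = 0 \<longleftrightarrow> f = 0 \<or> g = 0"
  using mult_ne0 by auto

lemma mult_cancel_l:
  fixes f g h :: "('v::finite \<Rightarrow>\<^sub>0 nat) \<Rightarrow>\<^sub>0 'a::idom"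
  assumes "h \<noteq> 0" "h * f = h * g"
  shows "f = g"
proof -
  have "h * (f - g) = 0" using assms(2) by (simp add: algebra_simps)
  then have "f - g = 0" using assms(1) mult_ne0[of h "f - g"] by auto
  then show ?thesis by simp
qed

lemma lo_mult:
  fixes f g :: "('v::finite \<Rightarrow>\<^sub>0 nat) \<Rightarrow>\<^sub>0 'a::idom"
  assumes w: "additive w" and "f \<noteq> 0" "g \<noteq> 0"
  shows "restr (\<lambda>m. w m = lo w f + lo w g) (f * g) = restr (\<lambda>m. w m = lo w f) f * restr (\<lambda>m. w m = lo w g) g"
    and "lo w (f * g) = lo w f + lo w g"
    and "f * g \<noteq> 0"
proof -
  show eq: "restr (\<lambda>m. w m = lo w f + lo w g) (f * g) = restr (\<lambda>m. w m = lo w f) f * restr (\<lambda>m. w m = lo w g) g"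
    by (rule G_lo[OF w]) (auto intro: lo_le)
  have ne: "restr (\<lambda>m. w m = lo w f) f * restr (\<lambda>m. w m = lo w g) g \<noteq> 0"
    using mult_ne0 restr_lo_ne assms by blast
  show "lo w (f * g) = lo w f + lo w g"
  proof (rule lo_eqI)
    fix m assume m: "m \<in> keys (f * g)"
    show "lo w f + lo w g \<le> w m" by (rule kmw_ge[OF w m, of "lo w f" "lo w g"]) (auto intro: lo_le)
  next
    show "restr (\<lambda>m. w m = lo w f + lo w g) (f * g) \<noteq> 0" using eq ne by simp
  qed
  show "f * g \<noteq> 0" using mult_ne0 assms by blast
qed

section \<open>Monomials and shifting\<close>

lemma var_pow: "(Var x :: ('v,'a::comm_ring_1) mpoly) ^ n = single (single x n) 1"
proof (induction n)
  case 0 then show ?case by simp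
next
  case (Suc n)
  have "(Var x :: ('v,'a) mpoly) ^ Suc n = Var x ^ n * Var x" by (rule power_Suc2)
  also have "\<dots> = single (single x n) 1 * single (single x 1) 1"
    by (subst Suc) (simp add: Var_def)
  also have "\<dots> = single (single x (Suc n)) 1"
    by (simp add: mult_single single_add[symmetric])
  finally show ?case .
qed

lemma expansion: "F = (\<Sum>m\<in>keys F. single m (lookup F m))"
proof (rule poly_mapping_eqI)
  fix k
  have "lookup (\<Sum>m\<in>keys F. single m (lookup F m)) k = (\<Sum>m\<in>keys F. if m = k then lookup F m else 0)"
    by (simp add: lookup_sum lookup_single when_def)
  also have "\<dots> = lookup F k" by (simp add: sum.delta' in_keys_iff)
  finally show "lookup F k = lookup (\<Sum>m\<in>keys F. single m (lookup F m)) k" by simp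
qed

lemma shift:
  fixes F :: "('v \<Rightarrow>\<^sub>0 nat) \<Rightarrow>\<^sub>0 'a::comm_ring_1"
  assumes "\<And>m v. m \<in> keys F \<Longrightarrow> lookup k v \<le> lookup m v"
  shows "F = single k 1 * (\<Sum>m\<in>keys F. single (m - k) (lookup F m))"
proof -
  have "single k 1 * single (m - k) (lookup F m) = single m (lookup F m)" if "m \<in> keys F" for m
  proof -
    have "k + (m - k) = m"
      by (rule poly_mapping_eqI) (use assms[OF that] in \<open>simp add: lookup_add lookup_minus\<close>)
    then show ?thesis by (simp add: mult_single)
  qed
  then have "single k 1 * (\<Sum>m\<in>keys F. single (m - k) (lookup F m)) = (\<Sum>m\<in>keys F. single m (lookup F m))"
    by (simp add: sum_distrib_left)
  then show ?thesis using expansion[of F] by simp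
qed

lemma keys_sum_sub: "m \<in> keys (sum f A) \<Longrightarrow> \<exists>a\<in>A. m \<in> keys (f a)"
proof (induction A rule: infinite_finite_induct)
  case (insert x F)
  then have "m \<in> keys (f x + sum f F)" by simp
  from keys_add_cases[OF this] insert.IH show ?case by blast
qed auto

lemma shift_keys:
  fixes F :: "('v \<Rightarrow>\<^sub>0 nat) \<Rightarrow>\<^sub>0 'a::comm_ring_1"
  assumes "m' \<in> keys (\<Sum>m\<in>keys F. single (m - k) (lookup F m))"
  shows "\<exists>m\<in>keys F. m' = m - k"
proof -
  obtain m where "m \<in> keys F" "m' \<in> keys (single (m - k) (lookup F m))" using keys_sum_sub[OF assms] by blast
  then show ?thesis by (auto split: if_splits)
qed


inductive_set SP :: "'r::comm_ring_1 set \<Rightarrow> 'r set \<Rightarrow> 'r set" for M N where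
  SP0: "0 \<in> SP M N"
| SPs: "f \<in> M \<Longrightarrow> g \<in> N \<Longrightarrow> e \<in> SP M N \<Longrightarrow> f * g + e \<in> SP M N"

lemma keys_diff_cases: "m \<in> keys (F - G) \<Longrightarrow> m \<in> keys F \<or> m \<in> keys (G::'k \<Rightarrow>\<^sub>0 'b::ab_group_add)"
  by (auto simp: in_keys_iff lookup_minus)

lemma SP_add: "e \<in> SP M N \<Longrightarrow> e' \<in> SP M N \<Longrightarrow> e + e' \<in> SP M N"
  by (induction e rule: SP.induct) (auto simp: add.assoc intro: SP.intros)

lemma SP_swap: "e \<in> SP M N \<Longrightarrow> e \<in> SP N M"
proof (induction e rule: SP.induct)
  case SP0 then show ?case by (rule SP.SP0)
next
  case (SPs f g e)
  have "g * f + e \<in> SP N M" by (rule SP.SPs[OF SPs(2) SPs(1) SPs(4)])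
  then show ?case by (simp add: mult.commute)
qed

lemma SP_prod: "f \<in> M \<Longrightarrow> g \<in> N \<Longrightarrow> f * g \<in> SP M N"
  using SPs[OF _ _ SP0, of f M g N] by simp

locale TV =
  fixes x1 x2 :: "'v::finite"
  assumes neq: "x1 \<noteq> x2"
begin

abbreviation "wt \<equiv> (\<lambda>m::'v \<Rightarrow>\<^sub>0 nat. lookup m x1 + lookup m x2)"
abbreviation "d1 \<equiv> (\<lambda>m::'v \<Rightarrow>\<^sub>0 nat. lookup m x1)"
abbreviation "d2 \<equiv> (\<lambda>m::'v \<Rightarrow>\<^sub>0 nat. lookup m x2)"

definition mono :: "nat \<Rightarrow> nat \<Rightarrow> ('v, 'a::comm_ring_1) mpoly" where
  "mono a b = single (single x1 a + single x2 b) 1"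

definition Form :: "nat \<Rightarrow> ('v, 'a::comm_ring_1) mpoly \<Rightarrow> bool" where
  "Form p f \<longleftrightarrow> (\<forall>m\<in>keys f. wt m = p)"

definition W0 :: "('v, 'a::comm_ring_1) mpoly \<Rightarrow> bool" where
  "W0 s \<longleftrightarrow> (\<forall>m\<in>keys s. lookup m x1 = 0 \<and> lookup m x2 = 0)"

definition Mod :: "nat \<Rightarrow> ('v, 'a::comm_ring_1) mpoly set \<Rightarrow> bool" where
  "Mod p M \<longleftrightarrow> (\<forall>f\<in>M. Form p f) \<and> 0 \<in> M \<and> (\<forall>f\<in>M. \<forall>g\<in>M. f + g \<in> M \<and> f - g \<in> M)
     \<and> (\<forall>s f. W0 s \<longrightarrow> f \<in> M \<longrightarrow> s * f \<in> M)"

lemma add_wt: "additive wt" unfolding additive_def by (simp add: lookup_add)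
lemma add_d1: "additive d1" unfolding additive_def by (simp add: lookup_add)
lemma add_d2: "additive d2" unfolding additive_def by (simp add: lookup_add)

lemma W0_keys: "W0 s \<Longrightarrow> m \<in> keys s \<Longrightarrow> lookup m x1 = 0 \<and> lookup m x2 = 0"
  unfolding W0_def by blast

lemma W0_wt: "W0 s \<Longrightarrow> m \<in> keys s \<Longrightarrow> wt m = 0" using W0_keys by fastforce
lemma W0_d2: "W0 s \<Longrightarrow> m \<in> keys s \<Longrightarrow> d2 m = 0" using W0_keys by fastforce
lemma W0_d1: "W0 s \<Longrightarrow> m \<in> keys s \<Longrightarrow> d1 m = 0" using W0_keys by fastforce

lemma W0_restr: "W0 (restr (\<lambda>m. wt m = 0) r)"
  unfolding W0_def by (auto simp: keys_restr)

lemma W0_add: "W0 s \<Longrightarrow> W0 t \<Longrightarrow> W0 (s + t)"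
  unfolding W0_def by (metis keys_add_cases)
lemma W0_diff: "W0 s \<Longrightarrow> W0 t \<Longrightarrow> W0 (s - t)"
  unfolding W0_def by (metis keys_diff_cases)
lemma W0_mult: "W0 s \<Longrightarrow> W0 t \<Longrightarrow> W0 (s * t)"
  unfolding W0_def by (auto dest!: keys_mult_sub simp: lookup_add)
lemma W0_zero: "W0 0" unfolding W0_def by simp
lemma W0_one: "W0 1" unfolding W0_def by simp

lemma Form_zero: "Form p 0" unfolding Form_def by simp
lemma Form_add: "Form p f \<Longrightarrow> Form p g \<Longrightarrow> Form p (f + g)"
  unfolding Form_def by (metis keys_add_cases)
lemma Form_diff: "Form p f \<Longrightarrow> Form p g \<Longrightarrow> Form p (f - g)"
  unfolding Form_def by (metis keys_diff_cases)
lemma Form_mult: "Form p f \<Longrightarrow> Form q g \<Longrightarrow> Form (p + q) (f * g)"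
  unfolding Form_def by (auto dest!: keys_mult_sub simp: lookup_add)
lemma Form_W0: "W0 s \<Longrightarrow> Form p f \<Longrightarrow> Form p (s * f)"
  using Form_mult[of 0 s p f] unfolding Form_def W0_def by fastforce
lemma Form_restr: "Form p f \<Longrightarrow> Form p (restr P f)"
  unfolding Form_def by (auto simp: keys_restr)
lemma Form_restr_wt: "Form p (restr (\<lambda>m. wt m = p) f)"
  unfolding Form_def by (auto simp: keys_restr)

lemma Mod_Form: "Mod p M \<Longrightarrow> f \<in> M \<Longrightarrow> Form p f" unfolding Mod_def by blast
lemma Mod_add: "Mod p M \<Longrightarrow> f \<in> M \<Longrightarrow> g \<in> M \<Longrightarrow> f + g \<in> M" unfolding Mod_def by blast
lemma Mod_diff: "Mod p M \<Longrightarrow> f \<in> M \<Longrightarrow> g \<in> M \<Longrightarrow> f - g \<in> M" unfolding Mod_def by blast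
lemma Mod_scale: "Mod p M \<Longrightarrow> W0 s \<Longrightarrow> f \<in> M \<Longrightarrow> s * f \<in> M" unfolding Mod_def by blast
lemma Mod_zero: "Mod p M \<Longrightarrow> 0 \<in> M" unfolding Mod_def by blast

lemma key_mono: "single x1 a + single x2 b = (k::'v \<Rightarrow>\<^sub>0 nat) \<Longrightarrow> lookup k x1 = a \<and> lookup k x2 = b"
  using neq by (auto simp: lookup_add lookup_single when_def)

lemma keys_mono: "keys (mono a b :: ('v, 'a::comm_ring_1) mpoly) = {single x1 a + single x2 b}"
  unfolding mono_def by simp

lemma mono_ne0: "(mono a b :: ('v, 'a::comm_ring_1) mpoly) \<noteq> 0"
  unfolding mono_def by (simp add: single_ne0)

lemma lookup_mono_key:
  "lookup (single x1 a + single x2 b :: 'v \<Rightarrow>\<^sub>0 nat) x1 = a"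
  "lookup (single x1 a + single x2 b :: 'v \<Rightarrow>\<^sub>0 nat) x2 = b"
  using key_mono by blast+

lemma Form_mono: "Form (a + b) (mono a b :: ('v, 'a::comm_ring_1) mpoly)"
  unfolding Form_def keys_mono by (simp add: lookup_mono_key)

lemma var_mono: "(Var x1 ^ a * Var x2 ^ b :: ('v, 'a::comm_ring_1) mpoly) = mono a b"
  unfolding var_pow mono_def by (simp add: mult_single)

lemma restr_mono:
  "restr P (mono a b :: ('v, 'a::comm_ring_1) mpoly) = (if P (single x1 a + single x2 b) then mono a b else 0)"
  by (auto intro: restr_id restr_none simp: keys_mono)

lemma restr_d2_mono:
  "restr (\<lambda>m. d2 m = t) (mono a b :: ('v, 'a::comm_ring_1) mpoly) = (if b = t then mono a b else 0)"
  by (simp add: restr_mono lookup_mono_key)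

lemma restr_d1_mono:
  "restr (\<lambda>m. d1 m = t) (mono a b :: ('v, 'a::comm_ring_1) mpoly) = (if a = t then mono a b else 0)"
  by (simp add: restr_mono lookup_mono_key)

lemma lo_d2_mono: "lo d2 (mono a b :: ('v, 'a::comm_ring_1) mpoly) = b"
  by (rule lo_eqI) (auto simp: keys_mono lookup_mono_key restr_d2_mono mono_ne0)

lemma lo_d1_mono: "lo d1 (mono a b :: ('v, 'a::comm_ring_1) mpoly) = a"
  by (rule lo_eqI) (auto simp: keys_mono lookup_mono_key restr_d1_mono mono_ne0)

lemma scalar:
  fixes F :: "('v, 'a::comm_ring_1) mpoly"
  assumes "\<And>m. m \<in> keys F \<Longrightarrow> lookup m x1 = a \<and> lookup m x2 = b"
  shows "\<exists>c. W0 c \<and> F = c * mono a b"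
proof -
  define k where "k = (single x1 a + single x2 b :: 'v \<Rightarrow>\<^sub>0 nat)"
  have le: "lookup k v \<le> lookup m v" if "m \<in> keys F" for m v
    using assms[OF that] neq by (auto simp: k_def lookup_add lookup_single when_def)
  define c where "c = (\<Sum>m\<in>keys F. single (m - k) (lookup F m))"
  have "F = single k 1 * c" unfolding c_def by (rule shift) (rule le)
  moreover have "W0 c"
    unfolding W0_def
  proof
    fix m' assume "m' \<in> keys c"
    then obtain m where "m \<in> keys F" "m' = m - k" unfolding c_def using shift_keys by blast
    then show "lookup m' x1 = 0 \<and> lookup m' x2 = 0"
      using assms by (auto simp: lookup_minus k_def lookup_mono_key)
  qed
  ultimately show ?thesis unfolding mono_def k_def by (metis mult.commute)
qed

lemma scalar_d2:
  fixes f :: "('v, 'a::comm_ring_1) mpoly"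
  assumes "Form p f"
  shows "\<exists>c. W0 c \<and> restr (\<lambda>m. d2 m = t) f = c * mono (p - t) t"
  by (rule scalar) (use assms in \<open>auto simp: Form_def keys_restr\<close>)

lemma lo_W0:
  fixes s :: "('v, 'a::comm_ring_1) mpoly"
  assumes "W0 s" "s \<noteq> 0"
  shows "lo d2 s = 0" "lo d1 s = 0"
proof -
  obtain m where m: "m \<in> keys s" using assms(2) by (metis ex_in_conv keys_eq_empty)
  have "lo d2 s \<le> d2 m" "lo d1 s \<le> d1 m" using lo_le[OF m] by auto
  then show "lo d2 s = 0" "lo d1 s = 0" using W0_keys[OF assms(1) m] by auto
qed

lemma lo_scale:
  fixes s e :: "('v, 'a::idom) mpoly"
  assumes "W0 s" "s \<noteq> 0" "e \<noteq> 0"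
  shows "lo d2 (s * e) = lo d2 e" "lo d1 (s * e) = lo d1 e"
  using lo_mult(2)[OF add_d2 assms(2,3)] lo_mult(2)[OF add_d1 assms(2,3)] lo_W0[OF assms(1,2)] by auto

lemma Form_lo_le:
  fixes f :: "('v, 'a::comm_ring_1) mpoly"
  assumes "Form p f" "f \<noteq> 0"
  shows "lo d2 f \<le> p" "lo d1 f + lo d2 f \<le> p"
proof -
  obtain m where m: "m \<in> keys f" using assms(2) by (metis ex_in_conv keys_eq_empty)
  have "wt m = p" using assms(1) m unfolding Form_def by blast
  then show "lo d2 f \<le> p" "lo d1 f + lo d2 f \<le> p" using lo_le[OF m, of d2] lo_le[OF m, of d1] by auto
qed

lemma Form_d2_le: "Form p f \<Longrightarrow> m \<in> keys f \<Longrightarrow> d2 m \<le> p"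
  unfolding Form_def by fastforce

lemma restr_scale:
  fixes s f :: "('v, 'a::comm_ring_1) mpoly"
  assumes "W0 s"
  shows "restr (\<lambda>m. d2 m = k) (s * f) = s * restr (\<lambda>m. d2 m = k) f"
  using G_const[OF add_d2, of s 0 k f] W0_d2[OF assms] by simp

lemma restr_scale_wt:
  fixes s f :: "('v, 'a::comm_ring_1) mpoly"
  assumes "W0 s"
  shows "restr (\<lambda>m. wt m = k) (s * f) = s * restr (\<lambda>m. wt m = k) f"
  using G_const[OF add_wt, of s 0 k f] W0_wt[OF assms] by simp

lemma SP_scale:
  assumes "Mod p M" "W0 s" "e \<in> SP M N"
  shows "s * e \<in> SP M N"
  using assms(3)
proof (induction e rule: SP.induct)
  case SP0 then show ?case by (simp add: SP.SP0)
next
  case (SPs f g e)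
  have "s * (f * g + e) = (s * f) * g + s * e" by (simp add: algebra_simps)
  then show ?case using SP.SPs[OF Mod_scale[OF assms(1,2) SPs(1)] SPs(2) SPs(4)] by simp
qed

lemma SP_Form:
  assumes "Mod p M" "Mod q N" "e \<in> SP M N"
  shows "Form (p + q) e"
  using assms(3) by (induction e rule: SP.induct)
    (auto intro: Form_add Form_mult Form_zero Mod_Form[OF assms(1)] Mod_Form[OF assms(2)])

lemma claimB:
  fixes M N :: "('v, 'a::idom) mpoly set"
  assumes "e \<in> SP M N" "restr (\<lambda>m. d2 m = 0) e \<noteq> 0"
  shows "\<exists>f\<in>M. f \<noteq> 0 \<and> lo d2 f = 0"
proof (rule ccontr)
  assume H: "\<not> ?thesis"
  have H': "lo d2 f \<noteq> 0" if "f \<in> M" "f \<noteq> 0" for f using H that by auto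
  have "restr (\<lambda>m. d2 m = 0) e = 0" if "e \<in> SP M N" for e
    using that
  proof (induction e rule: SP.induct)
    case SP0 then show ?case by simp
  next
    case (SPs f g e)
    have "restr (\<lambda>m. d2 m = 0) (f * g) = 0"
    proof (cases "f = 0")
      case False
      then have "lo d2 f \<noteq> 0" using H'[OF SPs(1)] by simp
      then have "\<And>m. m \<in> keys f \<Longrightarrow> 1 \<le> d2 m" using lo_le[of _ f d2] by fastforce
      then have "\<And>m. m \<in> keys (f * g) \<Longrightarrow> 1 \<le> d2 m" using kmw_ge[OF add_d2, of _ f g 1 0] by fastforce
      then show ?thesis by (intro restr_none) fastforce
    qed simp
    then show ?case using SPs(4) by (simp add: restr_add)
  qed
  then show False using assms by blast
qed

lemma claimC:
  fixes f g :: "('v, 'a::idom) mpoly"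
  assumes "f \<noteq> 0" "g \<noteq> 0"
  shows "restr (\<lambda>m. d2 m = lo d2 f + lo d2 g) (f * g) \<noteq> 0"
  using lo_mult(1)[OF add_d2 assms] mult_ne0 restr_lo_ne assms by metis

end


section \<open>Ideal basics\<close>

lemma ideal_0: "is_ideal I \<Longrightarrow> 0 \<in> I" unfolding is_ideal_def by blast
lemma ideal_add: "is_ideal I \<Longrightarrow> a \<in> I \<Longrightarrow> b \<in> I \<Longrightarrow> a + b \<in> I" unfolding is_ideal_def by blast
lemma ideal_mult_l: "is_ideal I \<Longrightarrow> a \<in> I \<Longrightarrow> r * a \<in> I" unfolding is_ideal_def by blast
lemma ideal_mult_r: "is_ideal I \<Longrightarrow> a \<in> I \<Longrightarrow> a * r \<in> I"
  using ideal_mult_l[of I a r] by (simp add: mult.commute)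
lemma ideal_neg: "is_ideal I \<Longrightarrow> a \<in> I \<Longrightarrow> - a \<in> I"
  using ideal_mult_l[of I a "-1"] by simp
lemma ideal_diff: "is_ideal I \<Longrightarrow> a \<in> I \<Longrightarrow> b \<in> I \<Longrightarrow> a - b \<in> I"
  using ideal_add[of I a "- b"] ideal_neg[of I b] by simp
lemma ideal_sum: "is_ideal I \<Longrightarrow> (\<And>x. x \<in> A \<Longrightarrow> f x \<in> I) \<Longrightarrow> sum f A \<in> I"
  by (induction A rule: infinite_finite_induct) (auto intro: ideal_0 ideal_add)
lemma ideal_UNIV: "is_ideal I \<Longrightarrow> 1 \<in> I \<Longrightarrow> I = UNIV"
  using ideal_mult_l[of I 1] by auto

lemma is_idealI:
  assumes "0 \<in> I" "\<And>a b. a \<in> I \<Longrightarrow> b \<in> I \<Longrightarrow> a + b \<in> I" "\<And>r a. a \<in> I \<Longrightarrow> r * a \<in> I"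
  shows "is_ideal I"
  using assms unfolding is_ideal_def by blast

lemma ideal_gen_ideal: "is_ideal (ideal_gen S)"
  unfolding ideal_gen_def is_ideal_def by blast

lemma ideal_gen_sub: "S \<subseteq> ideal_gen S"
  unfolding ideal_gen_def by blast

lemma ideal_gen_min: "is_ideal I \<Longrightarrow> S \<subseteq> I \<Longrightarrow> ideal_gen S \<subseteq> I"
  unfolding ideal_gen_def by blast

lemma ideal_mult_ideal: "is_ideal (ideal_mult I J)"
  unfolding ideal_mult_def by (rule ideal_gen_ideal)

lemma ideal_mult_prod: "a \<in> I \<Longrightarrow> b \<in> J \<Longrightarrow> a * b \<in> ideal_mult I J"
  unfolding ideal_mult_def by (rule subsetD[OF ideal_gen_sub]) blast

lemma ideal_mult_min: "is_ideal K \<Longrightarrow> (\<And>a b. a \<in> I \<Longrightarrow> b \<in> J \<Longrightarrow> a * b \<in> K) \<Longrightarrow> ideal_mult I J \<subseteq> K"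
  unfolding ideal_mult_def by (rule ideal_gen_min) auto

context TV
begin

lemma decomp:
  fixes h :: "('v, 'a::comm_ring_1) mpoly"
  assumes "\<And>m. m \<in> keys h \<Longrightarrow> 1 \<le> wt m"
  shows "\<exists>a b. h = Var x1 * a + Var x2 * b"
proof -
  define h1 where "h1 = restr (\<lambda>m. 1 \<le> d1 m) h"
  define h2 where "h2 = restr (\<lambda>m. \<not> 1 \<le> d1 m) h"
  have hs: "h = h1 + h2" unfolding h1_def h2_def by (rule restr_split)
  have e1: "h1 = single (single x1 1) 1 * (\<Sum>m\<in>keys h1. single (m - single x1 1) (lookup h1 m))"
    by (rule shift) (auto simp: h1_def keys_restr lookup_single when_def)
  have e2: "h2 = single (single x2 1) 1 * (\<Sum>m\<in>keys h2. single (m - single x2 1) (lookup h2 m))"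
  proof (rule shift)
    fix m v assume m: "m \<in> keys h2"
    then have "lookup m x1 = 0" "m \<in> keys h" by (auto simp: h2_def keys_restr)
    then have "1 \<le> lookup m x2" using assms by fastforce
    then show "lookup (single x2 1) v \<le> lookup m v" by (auto simp: lookup_single when_def)
  qed
  have "h = Var x1 * (\<Sum>m\<in>keys h1. single (m - single x1 1) (lookup h1 m))
     + Var x2 * (\<Sum>m\<in>keys h2. single (m - single x2 1) (lookup h2 m))"
    unfolding Var_def using hs e1 e2 by simp
  then show ?thesis by blast
qed

lemma pow_in:
  fixes a b :: "('v, 'a::comm_ring_1) mpoly"
  assumes J: "is_ideal J" and e1: "Var x1 ^ e \<in> J" and e2: "Var x2 ^ e \<in> J"
  shows "(Var x1 * a + Var x2 * b) ^ (2 * e) \<in> J"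
proof -
  have "(Var x1 * a + Var x2 * b) ^ (2 * e) =
    (\<Sum>k\<le>2*e. of_nat (2*e choose k) * (Var x1 * a) ^ k * (Var x2 * b) ^ (2*e - k))"
    by (rule binomial_ring)
  also have "\<dots> \<in> J"
  proof (rule ideal_sum[OF J])
    fix k assume k: "k \<in> {..2*e}"
    show "of_nat (2*e choose k) * (Var x1 * a) ^ k * (Var x2 * b) ^ (2*e - k) \<in> J"
    proof (cases "e \<le> k")
      case True
      have X: "Var x1 ^ k = Var x1 ^ e * Var x1 ^ (k - e)" using True by (simp flip: power_add)
      have "(Var x1 * a) ^ k = Var x1 ^ k * a ^ k" by (rule power_mult_distrib)
      also have "\<dots> = Var x1 ^ e * (Var x1 ^ (k - e) * a ^ k)" by (subst X) (rule mult.assoc)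
      finally have eq: "(Var x1 * a) ^ k = Var x1 ^ e * (Var x1 ^ (k - e) * a ^ k)" .
      have t: "(Var x1 * a) ^ k \<in> J" unfolding eq by (rule ideal_mult_r[OF J e1])
      show ?thesis by (rule ideal_mult_r[OF J ideal_mult_l[OF J t]])
    next
      case False
      then have "e \<le> 2 * e - k" by simp
      have X: "Var x2 ^ (2*e - k) = Var x2 ^ e * Var x2 ^ (2*e - k - e)"
      proof -
        have "Var x2 ^ e * Var x2 ^ (2*e - k - e) = Var x2 ^ (e + (2*e - k - e))" by (rule power_add[symmetric])
        also have "e + (2*e - k - e) = 2*e - k" using \<open>e \<le> 2 * e - k\<close> by simp
        finally show ?thesis by (rule sym)
      qed
      have "(Var x2 * b) ^ (2*e - k) = Var x2 ^ (2*e - k) * b ^ (2*e - k)" by (rule power_mult_distrib)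
      also have "\<dots> = Var x2 ^ e * (Var x2 ^ (2*e - k - e) * b ^ (2*e - k))" by (subst X) (rule mult.assoc)
      finally have eq: "(Var x2 * b) ^ (2*e - k) = Var x2 ^ e * (Var x2 ^ (2*e - k - e) * b ^ (2*e - k))" .
      have t: "(Var x2 * b) ^ (2*e - k) \<in> J" unfolding eq by (rule ideal_mult_r[OF J e2])
      show ?thesis by (rule ideal_mult_l[OF J t])
    qed
  qed
  finally show ?thesis .
qed

lemma restr_wt0_one: "restr (\<lambda>m. wt m = 0) (1 :: ('v, 'a::comm_ring_1) mpoly) = 1"
  by (rule restr_id) simp

lemma Q0:
  fixes M :: "('v, 'a::idom) mpoly set"
  assumes J: "is_ideal J" and e1: "Var x1 ^ e \<in> J" and e2: "Var x2 ^ e \<in> J"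
    and M: "Mod d M"
    and g0: "\<gamma>0 \<in> SP M ((\<lambda>j. restr (\<lambda>m. wt m = 0) j) ` J)" "restr (\<lambda>m. d2 m = 0) \<gamma>0 = mono d 0"
  shows "1 \<in> J"
proof -
  let ?N = "(\<lambda>j. restr (\<lambda>m. wt m = 0) j) ` J"
  have claim: "\<exists>u\<in>J. \<exists>c. W0 c \<and> restr (\<lambda>m. d2 m = 0) e' = c * mono d 0 \<and> restr (\<lambda>m. wt m = 0) u = c"
    if "e' \<in> SP M ?N" for e'
    using that
  proof (induction e' rule: SP.induct)
    case SP0
    then show ?case using ideal_0[OF J] W0_zero by (intro bexI[of _ 0]) auto
  next
    case (SPs f g e')
    from SPs.IH obtain u' c' where u': "u' \<in> J" "W0 c'" "restr (\<lambda>m. d2 m = 0) e' = c' * mono d 0"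
      "restr (\<lambda>m. wt m = 0) u' = c'" by blast
    from SPs(2) obtain j where j: "j \<in> J" "g = restr (\<lambda>m. wt m = 0) j" by blast
    have Wg: "W0 g" using j(2) W0_restr by simp
    obtain cf where cf: "W0 cf" "restr (\<lambda>m. d2 m = 0) f = cf * mono (d - 0) 0"
      using scalar_d2[OF Mod_Form[OF M SPs(1)]] by blast
    have "restr (\<lambda>m. d2 m = 0) (f * g) = g * restr (\<lambda>m. d2 m = 0) f"
      using restr_scale[OF Wg, of 0 f] by (simp add: mult.commute)
    then have r1: "restr (\<lambda>m. d2 m = 0) (f * g + e') = (g * cf + c') * mono d 0"
      using cf u'(3) by (simp add: restr_add algebra_simps)
    have r2: "restr (\<lambda>m. wt m = 0) (cf * j + u') = g * cf + c'"
      using restr_scale_wt[OF cf(1), of 0 j] j(2) u'(4) by (simp add: restr_add mult.commute)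
    have "cf * j + u' \<in> J" using ideal_add[OF J ideal_mult_l[OF J j(1)] u'(1)] .
    moreover have "W0 (g * cf + c')" using W0_add[OF W0_mult[OF Wg cf(1)] u'(2)] .
    ultimately show ?case using r1 r2 by blast
  qed
  obtain u c where u: "u \<in> J" "W0 c" "restr (\<lambda>m. d2 m = 0) \<gamma>0 = c * mono d 0" "restr (\<lambda>m. wt m = 0) u = c"
    using claim[OF g0(1)] by blast
  have "mono d 0 * c = mono d 0 * (1 :: ('v, 'a) mpoly)" using u(3) g0(2) by (simp add: mult.commute)
  then have c1: "c = 1" using mult_cancel_l[OF mono_ne0] by blast
  define h where "h = u - 1"
  have "restr (\<lambda>m. wt m = 0) h = 0" unfolding h_def restr_diff restr_wt0_one using u(4) c1 by simp
  then have "\<And>m. m \<in> keys h \<Longrightarrow> 1 \<le> wt m"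
  proof -
    fix m assume m: "m \<in> keys h" and r: "restr (\<lambda>m. wt m = 0) h = 0"
    show "1 \<le> wt m"
    proof (rule ccontr)
      assume "\<not> 1 \<le> wt m"
      then have "wt m = 0" by simp
      from restr_ne0[of m h "\<lambda>m. wt m = 0", OF m this] r show False by simp
    qed
  qed
  then obtain a b where hab: "h = Var x1 * a + Var x2 * b" using decomp by blast
  have hp: "h ^ (2 * e) \<in> J" unfolding hab by (rule pow_in[OF J e1 e2])
  have eq1: "1 - (- h) ^ (2 * e) = (1 - (- h)) * (\<Sum>i<2*e. (- h) ^ i)" by (rule one_diff_power_eq)
  have u1: "1 - (- h) = u" unfolding h_def by simp
  have eq2: "(- h) ^ (2 * e) = h ^ (2 * e)" by simp
  from eq1 have "1 = (1 - (- h)) * (\<Sum>i<2*e. (- h) ^ i) + (- h) ^ (2 * e)" by (simp only: diff_eq_eq)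
  then have "1 = u * (\<Sum>i<2*e. (- h) ^ i) + h ^ (2 * e)" by (simp only: u1 eq2)
  moreover have "u * (\<Sum>i<2*e. (- h) ^ i) + h ^ (2 * e) \<in> J"
    by (rule ideal_add[OF J ideal_mult_r[OF J u(1)] hp])
  ultimately show ?thesis by simp
qed

end


context TV
begin

lemma nz_ex: "nz_ideal I \<Longrightarrow> \<exists>a\<in>I. a \<noteq> 0"
  unfolding nz_ideal_def using ideal_0 by blast

lemma reduction:
  fixes G :: "('v,'a::idom) mpoly set" and Good :: "('v,'a) mpoly \<Rightarrow> bool"
  assumes GF: "\<And>\<gamma>. \<gamma> \<in> G \<Longrightarrow> Form d \<gamma>" and GG: "\<And>\<gamma>. \<gamma> \<in> G \<Longrightarrow> Good \<gamma>"
    and Good0: "Good 0" and Goodadd: "\<And>F F'. Good F \<Longrightarrow> Good F' \<Longrightarrow> Good (F + F')"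
    and Goodsc: "\<And>s F. W0 s \<Longrightarrow> Good F \<Longrightarrow> Good (s * F)"
    and g0: "\<gamma>0 \<in> G" "restr (\<lambda>m. d2 m = 0) \<gamma>0 = mono d 0"
    and pw: "Var x1 ^ e \<in> ideal_gen G" "Var x2 ^ e \<in> ideal_gen G"
    and I: "nz_ideal I" "I \<noteq> UNIV" and J: "nz_ideal J" "J \<noteq> UNIV"
    and A: "ideal_gen G = ideal_mult I J"
  shows "\<exists>p q M N. 1 \<le> p \<and> 1 \<le> q \<and> p + q = d \<and> Mod p M \<and> Mod q N
           \<and> (\<forall>f\<in>M. \<forall>g\<in>N. Good (f * g)) \<and> G \<subseteq> SP M N"
proof -
  let ?A = "ideal_gen G"
  have Ii: "is_ideal I" and Ji: "is_ideal J" using I J unfolding nz_ideal_def by auto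
  have AI: "?A \<subseteq> I" unfolding A by (rule ideal_mult_min[OF Ii]) (rule ideal_mult_r[OF Ii])
  have AJ: "?A \<subseteq> J" unfolding A by (rule ideal_mult_min[OF Ji]) (rule ideal_mult_l[OF Ji])
  define Q where "Q = {h. (\<forall>m\<in>keys h. d \<le> wt m) \<and> Good (restr (\<lambda>m. wt m = d) h)}"
  have Qi: "is_ideal Q"
  proof (rule is_idealI)
    show "0 \<in> Q" unfolding Q_def using Good0 by simp
  next
    fix a b assume a: "a \<in> Q" and b: "b \<in> Q"
    have "\<forall>m\<in>keys (a + b). d \<le> wt m"
    proof
      fix m assume "m \<in> keys (a + b)"
      then have "m \<in> keys a \<or> m \<in> keys b" by (rule keys_add_cases)
      then show "d \<le> wt m" using a b unfolding Q_def by blast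
    qed
    moreover have "Good (restr (\<lambda>m. wt m = d) (a + b))"
      using Goodadd a b unfolding Q_def restr_add by blast
    ultimately show "a + b \<in> Q" unfolding Q_def by blast
  next
    fix r a assume a: "a \<in> Q"
    have k: "\<forall>m\<in>keys (r * a). d \<le> wt m"
    proof
      fix m assume m: "m \<in> keys (r * a)"
      show "d \<le> wt m" using kmw_ge[OF add_wt m, of 0 d] a unfolding Q_def by simp
    qed
    have "restr (\<lambda>m. wt m = 0 + d) (r * a) = restr (\<lambda>m. wt m = 0) r * restr (\<lambda>m. wt m = d) a"
      by (rule G_lo[OF add_wt]) (use a in \<open>auto simp: Q_def\<close>)
    then have "restr (\<lambda>m. wt m = d) (r * a) = restr (\<lambda>m. wt m = 0) r * restr (\<lambda>m. wt m = d) a" by simp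
    then have "Good (restr (\<lambda>m. wt m = d) (r * a))" using Goodsc[OF W0_restr] a unfolding Q_def by simp
    then show "r * a \<in> Q" using k unfolding Q_def by simp
  qed
  have GQ: "G \<subseteq> Q"
  proof
    fix \<gamma> assume g: "\<gamma> \<in> G"
    have "restr (\<lambda>m. wt m = d) \<gamma> = \<gamma>" by (rule restr_id) (use GF[OF g] in \<open>simp add: Form_def\<close>)
    then show "\<gamma> \<in> Q" using GF[OF g] GG[OF g] unfolding Q_def Form_def by simp
  qed
  have AQ: "?A \<subseteq> Q" by (rule ideal_gen_min[OF Qi GQ])
  define p where "p = (LEAST k. \<exists>a\<in>I. a \<noteq> 0 \<and> lo wt a = k)"
  define q where "q = (LEAST k. \<exists>a\<in>J. a \<noteq> 0 \<and> lo wt a = k)"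
  have pex: "\<exists>a\<in>I. a \<noteq> 0 \<and> lo wt a = p"
    unfolding p_def by (rule LeastI_ex) (use nz_ex[OF I(1)] in blast)
  have qex: "\<exists>a\<in>J. a \<noteq> 0 \<and> lo wt a = q"
    unfolding q_def by (rule LeastI_ex) (use nz_ex[OF J(1)] in blast)
  have pmin: "p \<le> wt m" if "a \<in> I" "m \<in> keys a" for a m
  proof -
    have "a \<noteq> 0" using that(2) by auto
    then have "p \<le> lo wt a" unfolding p_def by (intro Least_le) (use that in blast)
    then show ?thesis using lo_le[OF that(2), of wt] by simp
  qed
  have qmin: "q \<le> wt m" if "a \<in> J" "m \<in> keys a" for a m
  proof -
    have "a \<noteq> 0" using that(2) by auto
    then have "q \<le> lo wt a" unfolding q_def by (intro Least_le) (use that in blast)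
    then show ?thesis using lo_le[OF that(2), of wt] by simp
  qed
  define M where "M = (\<lambda>a. restr (\<lambda>m. wt m = p) a) ` I"
  define N where "N = (\<lambda>a. restr (\<lambda>m. wt m = q) a) ` J"
  have ModI: "Mod k ((\<lambda>a. restr (\<lambda>m. wt m = k) a) ` K)" if K: "is_ideal K" for k and K :: "('v,'a) mpoly set"
    unfolding Mod_def
  proof (intro conjI ballI allI impI)
    show "f \<in> (\<lambda>a. restr (\<lambda>m. wt m = k) a) ` K \<Longrightarrow> Form k f" for f using Form_restr_wt by blast
    show "0 \<in> (\<lambda>a. restr (\<lambda>m. wt m = k) a) ` K" using ideal_0[OF K] by (intro image_eqI[of _ _ 0]) auto
  next
    fix f g assume "f \<in> (\<lambda>a. restr (\<lambda>m. wt m = k) a) ` K" "g \<in> (\<lambda>a. restr (\<lambda>m. wt m = k) a) ` K"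
    then obtain a b where ab: "a \<in> K" "b \<in> K" "f = restr (\<lambda>m. wt m = k) a" "g = restr (\<lambda>m. wt m = k) b" by blast
    show "f + g \<in> (\<lambda>a. restr (\<lambda>m. wt m = k) a) ` K"
      using ab ideal_add[OF K ab(1,2)] by (intro image_eqI[of _ _ "a + b"]) (auto simp: restr_add)
    show "f - g \<in> (\<lambda>a. restr (\<lambda>m. wt m = k) a) ` K"
      using ab ideal_diff[OF K ab(1,2)] by (intro image_eqI[of _ _ "a - b"]) (auto simp: restr_diff)
  next
    fix s f :: "('v,'a) mpoly" assume s: "W0 s" and "f \<in> (\<lambda>a. restr (\<lambda>m. wt m = k) a) ` K"
    then obtain a where a: "a \<in> K" "f = restr (\<lambda>m. wt m = k) a" by blast
    show "s * f \<in> (\<lambda>a. restr (\<lambda>m. wt m = k) a) ` K"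
      using a ideal_mult_l[OF K a(1)] restr_scale_wt[OF s, of k a] by (intro image_eqI[of _ _ "s * a"]) auto
  qed
  have MM: "Mod p M" unfolding M_def by (rule ModI[OF Ii])
  have NN: "Mod q N" unfolding N_def by (rule ModI[OF Ji])
  have prod_eq: "restr (\<lambda>m. wt m = p + q) (a * b) = restr (\<lambda>m. wt m = p) a * restr (\<lambda>m. wt m = q) b"
    if "a \<in> I" "b \<in> J" for a b
    by (rule G_lo[OF add_wt]) (use pmin[OF that(1)] qmin[OF that(2)] in auto)
  define Q2 where "Q2 = {h. (\<forall>m\<in>keys h. p + q \<le> wt m) \<and> restr (\<lambda>m. wt m = p + q) h \<in> SP M N}"
  have Q2i: "is_ideal Q2"
  proof (rule is_idealI)
    show "0 \<in> Q2" unfolding Q2_def by (simp add: SP.SP0)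
  next
    fix a b assume a: "a \<in> Q2" and b: "b \<in> Q2"
    have "\<forall>m\<in>keys (a + b). p + q \<le> wt m"
    proof
      fix m assume "m \<in> keys (a + b)"
      then have "m \<in> keys a \<or> m \<in> keys b" by (rule keys_add_cases)
      then show "p + q \<le> wt m" using a b unfolding Q2_def by blast
    qed
    moreover have "restr (\<lambda>m. wt m = p + q) (a + b) \<in> SP M N"
      using SP_add a b unfolding Q2_def restr_add by blast
    ultimately show "a + b \<in> Q2" unfolding Q2_def by blast
  next
    fix r a assume a: "a \<in> Q2"
    have k: "\<forall>m\<in>keys (r * a). p + q \<le> wt m"
    proof
      fix m assume m: "m \<in> keys (r * a)"
      show "p + q \<le> wt m" using kmw_ge[OF add_wt m, of 0 "p + q"] a unfolding Q2_def by simp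
    qed
    have "restr (\<lambda>m. wt m = 0 + (p + q)) (r * a) = restr (\<lambda>m. wt m = 0) r * restr (\<lambda>m. wt m = p + q) a"
      by (rule G_lo[OF add_wt]) (use a in \<open>auto simp: Q2_def\<close>)
    then have "restr (\<lambda>m. wt m = p + q) (r * a) = restr (\<lambda>m. wt m = 0) r * restr (\<lambda>m. wt m = p + q) a" by simp
    moreover have "restr (\<lambda>m. wt m = 0) r * restr (\<lambda>m. wt m = p + q) a \<in> SP M N"
      by (rule SP_scale[OF MM W0_restr]) (use a in \<open>simp add: Q2_def\<close>)
    ultimately show "r * a \<in> Q2" using k unfolding Q2_def by simp
  qed
  have IJQ2: "ideal_mult I J \<subseteq> Q2"
  proof (rule ideal_mult_min[OF Q2i])
    fix a b assume ab: "a \<in> I" "b \<in> J"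
    have k: "\<forall>m\<in>keys (a * b). p + q \<le> wt m"
      using kmw_ge[OF add_wt _ pmin[OF ab(1)] qmin[OF ab(2)]] by blast
    have "restr (\<lambda>m. wt m = p) a * restr (\<lambda>m. wt m = q) b \<in> SP M N"
      by (rule SP_prod) (use ab in \<open>auto simp: M_def N_def\<close>)
    then show "a * b \<in> Q2" using k prod_eq[OF ab] unfolding Q2_def by simp
  qed
  have AQ2: "?A \<subseteq> Q2" using IJQ2 A by simp
  have g0ne: "\<gamma>0 \<noteq> 0" using g0(2) mono_ne0 by force
  then obtain m0 where m0: "m0 \<in> keys \<gamma>0" by (metis ex_in_conv keys_eq_empty)
  have "\<gamma>0 \<in> Q2" using AQ2 ideal_gen_sub g0(1) by blast
  then have "p + q \<le> wt m0" using m0 unfolding Q2_def by blast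
  moreover have "wt m0 = d" using GF[OF g0(1)] m0 unfolding Form_def by blast
  ultimately have le1: "p + q \<le> d" by simp
  obtain a0 where a0: "a0 \<in> I" "a0 \<noteq> 0" "lo wt a0 = p" using pex by blast
  obtain b0 where b0: "b0 \<in> J" "b0 \<noteq> 0" "lo wt b0 = q" using qex by blast
  have ab0: "a0 * b0 \<noteq> 0" "lo wt (a0 * b0) = p + q"
    using lo_mult(2,3)[OF add_wt a0(2) b0(2)] a0(3) b0(3) by auto
  from lo_ex[OF ab0(1), of wt] obtain m1 where m1: "m1 \<in> keys (a0 * b0)" "wt m1 = lo wt (a0 * b0)" by (rule bexE)
  have "a0 * b0 \<in> Q" using AQ A ideal_mult_prod[OF a0(1) b0(1)] by auto
  then have "d \<le> wt m1" using m1(1) unfolding Q_def by blast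
  then have pq: "p + q = d" using le1 m1(2) ab0(2) by simp
  have good: "\<forall>f\<in>M. \<forall>g\<in>N. Good (f * g)"
  proof (intro ballI)
    fix f g assume "f \<in> M" "g \<in> N"
    then obtain a b where ab: "a \<in> I" "b \<in> J" "f = restr (\<lambda>m. wt m = p) a" "g = restr (\<lambda>m. wt m = q) b"
      unfolding M_def N_def by blast
    have "a * b \<in> Q" using AQ A ideal_mult_prod[OF ab(1,2)] by auto
    then have "Good (restr (\<lambda>m. wt m = d) (a * b))" unfolding Q_def by blast
    then show "Good (f * g)" using prod_eq[OF ab(1,2)] ab(3,4) pq by simp
  qed
  have GSP: "G \<subseteq> SP M N"
  proof
    fix \<gamma> assume g: "\<gamma> \<in> G"
    then have "\<gamma> \<in> Q2" using AQ2 ideal_gen_sub by blast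
    then have "restr (\<lambda>m. wt m = d) \<gamma> \<in> SP M N" unfolding Q2_def pq by blast
    moreover have "restr (\<lambda>m. wt m = d) \<gamma> = \<gamma>" by (rule restr_id) (use GF[OF g] in \<open>simp add: Form_def\<close>)
    ultimately show "\<gamma> \<in> SP M N" by simp
  qed
  have q1: "1 \<le> q"
  proof (rule ccontr)
    assume "\<not> 1 \<le> q"
    then have q0: "q = 0" by simp
    have "1 \<in> J"
    proof (rule Q0[OF Ji])
      show "Var x1 ^ e \<in> J" "Var x2 ^ e \<in> J" using pw AJ by auto
      show "Mod d M" using MM pq q0 by simp
      show "\<gamma>0 \<in> SP M ((\<lambda>j. restr (\<lambda>m. wt m = 0) j) ` J)" using GSP g0(1) q0 unfolding N_def by auto
      show "restr (\<lambda>m. d2 m = 0) \<gamma>0 = mono d 0" by (rule g0(2))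
    qed
    then show False using ideal_UNIV[OF Ji] J(2) by simp
  qed
  have p1: "1 \<le> p"
  proof (rule ccontr)
    assume "\<not> 1 \<le> p"
    then have p0: "p = 0" by simp
    have "1 \<in> I"
    proof (rule Q0[OF Ii])
      show "Var x1 ^ e \<in> I" "Var x2 ^ e \<in> I" using pw AI by auto
      show "Mod d N" using NN pq p0 by simp
      show "\<gamma>0 \<in> SP N ((\<lambda>j. restr (\<lambda>m. wt m = 0) j) ` I)" using SP_swap GSP g0(1) p0 unfolding M_def by auto
      show "restr (\<lambda>m. d2 m = 0) \<gamma>0 = mono d 0" by (rule g0(2))
    qed
    then show False using ideal_UNIV[OF Ii] I(2) by simp
  qed
  show ?thesis using p1 q1 pq MM NN good GSP by blast
qed

end


context TV
begin

definition GoodE :: "nat set \<Rightarrow> ('v, 'a::comm_ring_1) mpoly \<Rightarrow> bool" where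
  "GoodE E F \<longleftrightarrow> (\<forall>t. t \<notin> E \<longrightarrow> restr (\<lambda>m. d2 m = t) F = 0)"

lemma GoodE_mem:
  fixes f g :: "('v, 'a::idom) mpoly"
  assumes "GoodE E (f * g)" "f \<noteq> 0" "g \<noteq> 0"
  shows "lo d2 f + lo d2 g \<in> E"
  using assms claimC[OF assms(2,3)] unfolding GoodE_def by blast

lemma GoodE_zero: "GoodE E 0" unfolding GoodE_def by simp
lemma GoodE_add: "GoodE E F \<Longrightarrow> GoodE E F' \<Longrightarrow> GoodE E (F + F')"
  unfolding GoodE_def by (simp add: restr_add)
lemma GoodE_scale: "W0 s \<Longrightarrow> GoodE E F \<Longrightarrow> GoodE E (s * F)"
  unfolding GoodE_def by (simp add: restr_scale)

lemma keys_d2_ge_lo: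
  fixes f :: "('v, 'a::comm_ring_1) mpoly"
  shows "m \<in> keys f \<Longrightarrow> lo d2 f \<le> d2 m"
  by (rule lo_le)

lemma keys_scale_d2:
  fixes s f :: "('v, 'a::comm_ring_1) mpoly"
  assumes "W0 s" "m \<in> keys (s * f)" "\<And>m. m \<in> keys f \<Longrightarrow> l \<le> d2 m"
  shows "l \<le> d2 m"
  using kmw_ge[OF add_d2 assms(2), of 0 l] assms(3) W0_d2[OF assms(1)] by simp

lemma rank1:
  fixes M N :: "('v, 'a::idom) mpoly set"
  assumes M: "Mod p M" and N: "Mod q N" and f0: "f0 \<in> M" "f0 \<noteq> 0"
    and same: "\<And>f. f \<in> M \<Longrightarrow> f \<noteq> 0 \<Longrightarrow> lo d2 f = lo d2 f0"
  shows "\<exists>\<kappa>. W0 \<kappa> \<and> \<kappa> \<noteq> 0 \<and> (\<forall>e\<in>SP M N. \<exists>n. Form q n \<and> \<kappa> * e = f0 * n)"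
proof -
  define l where "l = lo d2 f0"
  obtain \<kappa> where \<kappa>: "W0 \<kappa>" "restr (\<lambda>m. d2 m = l) f0 = \<kappa> * mono (p - l) l"
    using scalar_d2[OF Mod_Form[OF M f0(1)]] by blast
  have r0: "restr (\<lambda>m. d2 m = l) f0 \<noteq> 0" unfolding l_def by (rule restr_lo_ne[OF f0(2)])
  then have k0: "\<kappa> \<noteq> 0" using \<kappa>(2) by auto
  have kb: "l \<le> d2 m" if "f \<in> M" "m \<in> keys f" for f m
  proof -
    have "f \<noteq> 0" using that(2) by auto
    then show ?thesis using same[OF that(1)] lo_le[OF that(2), of d2] unfolding l_def by simp
  qed
  have prp: "\<exists>c. W0 c \<and> \<kappa> * f = c * f0" if f: "f \<in> M" for f
  proof -
    obtain c where c: "W0 c" "restr (\<lambda>m. d2 m = l) f = c * mono (p - l) l"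
      using scalar_d2[OF Mod_Form[OF M f]] by blast
    define h where "h = \<kappa> * f - c * f0"
    have hM: "h \<in> M" unfolding h_def
      by (rule Mod_diff[OF M Mod_scale[OF M \<kappa>(1) f] Mod_scale[OF M c(1) f0(1)]])
    have rh: "restr (\<lambda>m. d2 m = l) h = 0"
      unfolding h_def restr_diff restr_scale[OF \<kappa>(1)] restr_scale[OF c(1)] c(2) \<kappa>(2)
      by (simp add: algebra_simps)
    have hk: "l \<le> d2 m" if "m \<in> keys h" for m
    proof -
      have "m \<in> keys (\<kappa> * f) \<or> m \<in> keys (c * f0)" using that unfolding h_def by (rule keys_diff_cases)
      then show ?thesis
      proof
        assume "m \<in> keys (\<kappa> * f)" then show ?thesis by (rule keys_scale_d2[OF \<kappa>(1)]) (rule kb[OF f])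
      next
        assume "m \<in> keys (c * f0)" then show ?thesis by (rule keys_scale_d2[OF c(1)]) (rule kb[OF f0(1)])
      qed
    qed
    have "h = 0"
    proof (rule ccontr)
      assume hne: "h \<noteq> 0"
      have "lo d2 h = l" using same[OF hM hne] unfolding l_def .
      then show False using restr_lo_ne[OF hne, of d2] rh by simp
    qed
    then show ?thesis using c(1) unfolding h_def by auto
  qed
  have "\<exists>n. Form q n \<and> \<kappa> * e = f0 * n" if "e \<in> SP M N" for e
    using that
  proof (induction e rule: SP.induct)
    case SP0 then show ?case by (intro exI[of _ 0]) (simp add: Form_zero)
  next
    case (SPs f g e)
    obtain n where n: "Form q n" "\<kappa> * e = f0 * n" using SPs.IH by blast
    obtain c where c: "W0 c" "\<kappa> * f = c * f0" using prp[OF SPs(1)] by blast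
    have "\<kappa> * (f * g + e) = (\<kappa> * f) * g + \<kappa> * e" by (simp add: algebra_simps)
    also have "\<dots> = (c * f0) * g + f0 * n" using c(2) n(2) by simp
    also have "\<dots> = f0 * (c * g + n)" by (simp add: algebra_simps)
    finally have "\<kappa> * (f * g + e) = f0 * (c * g + n)" .
    moreover have "Form q (c * g + n)" using Form_add[OF Form_W0[OF c(1) Mod_Form[OF N SPs(2)]] n(1)] .
    ultimately show ?case by blast
  qed
  then show ?thesis using \<kappa>(1) k0 by blast
qed

lemma lo_prod_eq:
  fixes \<kappa> e f0 n :: "('v, 'a::idom) mpoly"
  assumes "W0 \<kappa>" "\<kappa> \<noteq> 0" "e \<noteq> 0" "\<kappa> * e = f0 * n"
  shows "f0 \<noteq> 0" "n \<noteq> 0" "lo d2 e = lo d2 f0 + lo d2 n" "lo d1 e = lo d1 f0 + lo d1 n"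
proof -
  have ne: "\<kappa> * e \<noteq> 0" using mult_ne0 assms by blast
  show f0: "f0 \<noteq> 0" and n: "n \<noteq> 0" using ne assms(4) by auto
  show "lo d2 e = lo d2 f0 + lo d2 n"
    using lo_scale(1)[OF assms(1-3)] lo_mult(2)[OF add_d2 f0 n] assms(4) by simp
  show "lo d1 e = lo d1 f0 + lo d1 n"
    using lo_scale(2)[OF assms(1-3)] lo_mult(2)[OF add_d1 f0 n] assms(4) by simp
qed

lemma rank2_bc:
  fixes M N :: "('v, 'a::idom) mpoly set"
  assumes M: "Mod p M" and N: "Mod q N" and pq: "p + q = d" "1 \<le> p"
    and e1: "mono d 0 \<in> SP M N" and e2: "mono 0 d \<in> SP M N"
    and f0: "f0 \<in> M" "f0 \<noteq> 0"
  shows "\<exists>f\<in>M. f \<noteq> 0 \<and> lo d2 f \<noteq> lo d2 f0"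
proof (rule ccontr)
  assume "\<not> ?thesis"
  then have same: "\<And>f. f \<in> M \<Longrightarrow> f \<noteq> 0 \<Longrightarrow> lo d2 f = lo d2 f0" by auto
  obtain \<kappa> where \<kappa>: "W0 \<kappa>" "\<kappa> \<noteq> 0" "\<forall>e\<in>SP M N. \<exists>n. Form q n \<and> \<kappa> * e = f0 * n"
    using rank1[OF M N f0 same] by blast
  obtain n1 where n1: "Form q n1" "\<kappa> * mono d 0 = f0 * n1" using \<kappa>(3) e1 by blast
  obtain n2 where n2: "Form q n2" "\<kappa> * mono 0 d = f0 * n2" using \<kappa>(3) e2 by blast
  note a = lo_prod_eq[OF \<kappa>(1,2) mono_ne0 n1(2)]
  note b = lo_prod_eq[OF \<kappa>(1,2) mono_ne0 n2(2)]
  have "lo d2 f0 = 0" using a(3) by (simp add: lo_d2_mono)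
  moreover have "lo d2 n2 \<le> q" using Form_lo_le(1)[OF n2(1) b(2)] .
  ultimately show False using b(3) pq by (simp add: lo_d2_mono)
qed

lemma mono_sum_lo:
  shows "lo d2 (mono 3 0 + mono 0 3 :: ('v, 'a::idom) mpoly) = 0"
    "lo d1 (mono 3 0 + mono 0 3 :: ('v, 'a::idom) mpoly) = 0"
    "(mono 3 0 + mono 0 3 :: ('v, 'a::idom) mpoly) \<noteq> 0"
proof -
  show "lo d2 (mono 3 0 + mono 0 3 :: ('v, 'a::idom) mpoly) = 0"
    by (rule lo_eqI) (simp_all add: restr_add restr_d2_mono mono_ne0)
  show "lo d1 (mono 3 0 + mono 0 3 :: ('v, 'a::idom) mpoly) = 0"
    by (rule lo_eqI) (simp_all add: restr_add restr_d1_mono mono_ne0)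
  have "restr (\<lambda>m. d2 m = 0) (mono 3 0 + mono 0 3 :: ('v, 'a::idom) mpoly) = mono 3 0"
    by (simp add: restr_add restr_d2_mono)
  then show "(mono 3 0 + mono 0 3 :: ('v, 'a::idom) mpoly) \<noteq> 0" using mono_ne0 by force
qed

lemma rank2_c':
  fixes M N :: "('v, 'a::idom) mpoly set"
  assumes M: "Mod p M" and N: "Mod q N" and pq: "p + q = 3" "1 \<le> p"
    and e1: "mono 2 1 \<in> SP M N" and e2: "mono 3 0 + mono 0 3 \<in> SP M N"
    and f0: "f0 \<in> M" "f0 \<noteq> 0"
  shows "\<exists>f\<in>M. f \<noteq> 0 \<and> lo d2 f \<noteq> lo d2 f0"
proof (rule ccontr)
  assume "\<not> ?thesis"
  then have same: "\<And>f. f \<in> M \<Longrightarrow> f \<noteq> 0 \<Longrightarrow> lo d2 f = lo d2 f0" by auto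
  obtain \<kappa> where \<kappa>: "W0 \<kappa>" "\<kappa> \<noteq> 0" "\<forall>e\<in>SP M N. \<exists>n. Form q n \<and> \<kappa> * e = f0 * n"
    using rank1[OF M N f0 same] by blast
  obtain n1 where n1: "Form q n1" "\<kappa> * mono 2 1 = f0 * n1" using \<kappa>(3) e1 by blast
  obtain n2 where n2: "Form q n2" "\<kappa> * (mono 3 0 + mono 0 3) = f0 * n2" using \<kappa>(3) e2 by blast
  note a = lo_prod_eq[OF \<kappa>(1,2) mono_ne0 n1(2)]
  note b = lo_prod_eq[OF \<kappa>(1,2) mono_sum_lo(3) n2(2)]
  have x1: "lo d1 f0 + lo d2 f0 \<le> p" using Form_lo_le(2)[OF Mod_Form[OF M f0(1)] f0(2)] .
  have x2: "lo d1 n1 + lo d2 n1 \<le> q" using Form_lo_le(2)[OF n1(1) a(2)] .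
  have "lo d2 f0 + lo d2 n1 = 1" "lo d1 f0 + lo d1 n1 = 2"
    using a(3,4) by (simp_all add: lo_d2_mono lo_d1_mono)
  then have "lo d1 f0 + lo d2 f0 = p" using x1 x2 pq by linarith
  moreover have "lo d1 f0 + lo d1 n2 = 0" using trans[OF b(4)[symmetric] mono_sum_lo(2)] .
  moreover have "lo d2 f0 + lo d2 n2 = 0" using trans[OF b(3)[symmetric] mono_sum_lo(1)] .
  ultimately show False using pq by simp
qed

end


context TV
begin

fun lspan :: "('v, 'a::comm_ring_1) mpoly list \<Rightarrow> ('v, 'a) mpoly set" where
  "lspan [] = {0}"
| "lspan (P # Ps) = {s * P + e | s e. W0 s \<and> e \<in> lspan Ps}"

lemma lspan_consI: "W0 s \<Longrightarrow> e \<in> lspan Ps \<Longrightarrow> s * P + e \<in> lspan (P # Ps)"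
  by auto

lemma lspan_zero: "0 \<in> lspan Ps"
proof (induction Ps)
  case (Cons P Ps)
  then show ?case using lspan_consI[OF W0_zero Cons, of P] by simp
qed simp

lemma lspan_add: "e \<in> lspan Ps \<Longrightarrow> e' \<in> lspan Ps \<Longrightarrow> e + e' \<in> lspan Ps"
proof (induction Ps arbitrary: e e')
  case Nil then show ?case by simp
next
  case (Cons P Ps)
  obtain s e1 where a: "W0 s" "e1 \<in> lspan Ps" "e = s * P + e1" using Cons.prems(1) by auto
  obtain s' e1' where b: "W0 s'" "e1' \<in> lspan Ps" "e' = s' * P + e1'" using Cons.prems(2) by auto
  have "e + e' = (s + s') * P + (e1 + e1')" using a(3) b(3) by (simp add: algebra_simps)
  then show ?case using lspan_consI[OF W0_add[OF a(1) b(1)] Cons.IH[OF a(2) b(2)]] by simp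
qed

lemma lspan_scale: "W0 c \<Longrightarrow> e \<in> lspan Ps \<Longrightarrow> c * e \<in> lspan Ps"
proof (induction Ps arbitrary: e)
  case Nil then show ?case by simp
next
  case (Cons P Ps)
  obtain s e1 where a: "W0 s" "e1 \<in> lspan Ps" "e = s * P + e1" using Cons.prems(2) by auto
  have "c * e = (c * s) * P + c * e1" using a(3) by (simp add: algebra_simps)
  then show ?case using lspan_consI[OF W0_mult[OF Cons.prems(1) a(1)] Cons.IH[OF Cons.prems(1) a(2)]] by simp
qed

lemma W0_m1: "W0 (- 1)"
  using W0_diff[OF W0_zero W0_one] by simp

lemma lspan_diff: "e \<in> lspan Ps \<Longrightarrow> e' \<in> lspan Ps \<Longrightarrow> e - e' \<in> lspan Ps"
  using lspan_add[of e Ps "(- 1) * e'"] lspan_scale[OF W0_m1, of e' Ps] by simp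

lemma LC_helper:
  fixes P :: "('v, 'a::idom) mpoly"
  assumes u1: "u1 \<in> lspan (P # Ps)" "u1 \<noteq> 0" "lo d2 u1 = t1"
    and u2: "u2 \<in> lspan (P # Ps)" "u2 \<noteq> 0" "lo d2 u2 = t2"
    and lt: "t1 < t2"
    and n1: "\<not> (\<exists>u\<in>lspan Ps. u \<noteq> 0 \<and> lo d2 u = t1)"
    and n2: "\<not> (\<exists>u\<in>lspan Ps. u \<noteq> 0 \<and> lo d2 u = t2)"
  shows False
proof -
  obtain s1 e1 where a: "W0 s1" "e1 \<in> lspan Ps" "u1 = s1 * P + e1" using u1(1) by auto
  obtain s2 e2 where b: "W0 s2" "e2 \<in> lspan Ps" "u2 = s2 * P + e2" using u2(1) by auto
  have s1: "s1 \<noteq> 0" using a n1 u1 by auto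
  have s2: "s2 \<noteq> 0" using b n2 u2 by auto
  define w where "w = s2 * e1 - s1 * e2"
  have wsp: "w \<in> lspan Ps" unfolding w_def by (intro lspan_diff lspan_scale a b)
  have weq: "w = s2 * u1 - s1 * u2" unfolding w_def a(3) b(3) by (simp add: algebra_simps)
  have r2: "restr (\<lambda>m. d2 m = t1) u2 = 0" by (rule restr_below_lo) (use lt u2(3) in simp)
  have r1: "restr (\<lambda>m. d2 m = t1) u1 \<noteq> 0" using restr_lo_ne[OF u1(2), of d2] u1(3) by simp
  have rw: "restr (\<lambda>m. d2 m = t1) w = s2 * restr (\<lambda>m. d2 m = t1) u1"
    unfolding weq restr_diff restr_scale[OF b(1)] restr_scale[OF a(1)] r2 by simp
  have rwne: "restr (\<lambda>m. d2 m = t1) w \<noteq> 0" unfolding rw using mult_ne0[OF s2 r1] .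
  have kw: "t1 \<le> d2 m" if "m \<in> keys w" for m
  proof -
    have "m \<in> keys (s2 * u1) \<or> m \<in> keys (s1 * u2)" using that unfolding weq by (rule keys_diff_cases)
    then show ?thesis
    proof
      assume "m \<in> keys (s2 * u1)"
      then show ?thesis by (rule keys_scale_d2[OF b(1)]) (use lo_le[of _ u1 d2] u1(3) in auto)
    next
      assume "m \<in> keys (s1 * u2)"
      then have "t2 \<le> d2 m" by (rule keys_scale_d2[OF a(1)]) (use lo_le[of _ u2 d2] u2(3) in auto)
      then show ?thesis using lt by simp
    qed
  qed
  have "lo d2 w = t1" by (rule lo_eqI[OF kw rwne])
  moreover have "w \<noteq> 0" using rwne by auto
  ultimately show False using n1 wsp by blast
qed

lemma LC:
  fixes Ps :: "('v, 'a::idom) mpoly list"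
  shows "finite T \<Longrightarrow> (\<forall>t\<in>T. \<exists>u\<in>lspan Ps. u \<noteq> 0 \<and> lo d2 u = t) \<Longrightarrow> card T \<le> length Ps"
proof (induction Ps arbitrary: T)
  case Nil
  then have "T = {}" by auto
  then show ?case by simp
next
  case (Cons P Ps)
  define T' where "T' = {t \<in> T. \<exists>u\<in>lspan Ps. u \<noteq> 0 \<and> lo d2 u = t}"
  have fT': "finite T'" using Cons.prems(1) unfolding T'_def by simp
  have c1: "card T' \<le> length Ps" by (rule Cons.IH[OF fT']) (auto simp: T'_def)
  have one: "\<forall>a1\<in>T - T'. \<forall>a2\<in>T - T'. a1 = a2"
  proof (intro ballI)
    fix a1 a2 assume h1: "a1 \<in> T - T'" and h2: "a2 \<in> T - T'"
    obtain u1 where u1: "u1 \<in> lspan (P # Ps)" "u1 \<noteq> 0" "lo d2 u1 = a1" using h1 Cons.prems(2) by blast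
    obtain u2 where u2: "u2 \<in> lspan (P # Ps)" "u2 \<noteq> 0" "lo d2 u2 = a2" using h2 Cons.prems(2) by blast
    have n1: "\<not> (\<exists>u\<in>lspan Ps. u \<noteq> 0 \<and> lo d2 u = a1)" using h1 unfolding T'_def by blast
    have n2: "\<not> (\<exists>u\<in>lspan Ps. u \<noteq> 0 \<and> lo d2 u = a2)" using h2 unfolding T'_def by blast
    show "a1 = a2"
    proof (rule linorder_cases[of a1 a2])
      assume "a1 < a2" then show ?thesis using LC_helper[OF u1 u2 _ n1 n2] by blast
    next
      assume "a2 < a1" then show ?thesis using LC_helper[OF u2 u1 _ n2 n1] by blast
    qed
  qed
  have c2: "card (T - T') \<le> 1"
    using card_le_Suc0_iff_eq[of "T - T'"] Cons.prems(1) one by simp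
  have "T = T' \<union> (T - T')" unfolding T'_def by blast
  then have "card T \<le> card T' + card (T - T')" by (metis card_Un_le)
  then show ?case using c1 c2 by simp
qed

lemma span2:
  fixes M :: "('v, 'a::idom) mpoly set"
  assumes M: "Mod p M" and f0: "f0 \<in> M" "f0 \<noteq> 0" "lo d2 f0 = 0"
    and f1: "f1 \<in> M" "f1 \<noteq> 0" "lo d2 f1 = 1"
    and le1: "\<And>f. f \<in> M \<Longrightarrow> f \<noteq> 0 \<Longrightarrow> lo d2 f \<le> 1"
  shows "\<exists>\<kappa>. W0 \<kappa> \<and> \<kappa> \<noteq> 0 \<and> (\<forall>f\<in>M. \<exists>a b. W0 a \<and> W0 b \<and> \<kappa> * f = a * f0 + b * f1)"
proof -
  obtain \<alpha> where \<alpha>: "W0 \<alpha>" "restr (\<lambda>m. d2 m = 0) f0 = \<alpha> * mono (p - 0) 0"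
    using scalar_d2[OF Mod_Form[OF M f0(1)]] by blast
  obtain \<beta> where \<beta>: "W0 \<beta>" "restr (\<lambda>m. d2 m = 1) f1 = \<beta> * mono (p - 1) 1"
    using scalar_d2[OF Mod_Form[OF M f1(1)]] by blast
  have "\<alpha> \<noteq> 0" using \<alpha>(2) restr_lo_ne[OF f0(2), of d2] f0(3) by auto
  moreover have "\<beta> \<noteq> 0" using \<beta>(2) restr_lo_ne[OF f1(2), of d2] f1(3) by auto
  ultimately have k0: "\<beta> * \<alpha> \<noteq> 0" using mult_ne0 by blast
  have f10: "restr (\<lambda>m. d2 m = 0) f1 = 0" by (rule restr_below_lo) (simp add: f1(3))
  have "\<exists>a b. W0 a \<and> W0 b \<and> (\<beta> * \<alpha>) * f = a * f0 + b * f1" if f: "f \<in> M" for f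
  proof -
    obtain a where a: "W0 a" "restr (\<lambda>m. d2 m = 0) f = a * mono (p - 0) 0"
      using scalar_d2[OF Mod_Form[OF M f]] by blast
    define h where "h = \<alpha> * f - a * f0"
    have hM: "h \<in> M" unfolding h_def
      by (rule Mod_diff[OF M Mod_scale[OF M \<alpha>(1) f] Mod_scale[OF M a(1) f0(1)]])
    have rh0: "restr (\<lambda>m. d2 m = 0) h = 0"
      unfolding h_def restr_diff restr_scale[OF \<alpha>(1)] restr_scale[OF a(1)] a(2) \<alpha>(2)
      by (simp add: algebra_simps)
    obtain b where b: "W0 b" "restr (\<lambda>m. d2 m = 1) h = b * mono (p - 1) 1"
      using scalar_d2[OF Mod_Form[OF M hM]] by blast
    define h' where "h' = \<beta> * h - b * f1"
    have h'M: "h' \<in> M" unfolding h'_def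
      by (rule Mod_diff[OF M Mod_scale[OF M \<beta>(1) hM] Mod_scale[OF M b(1) f1(1)]])
    have r0: "restr (\<lambda>m. d2 m = 0) h' = 0"
      unfolding h'_def restr_diff restr_scale[OF \<beta>(1)] restr_scale[OF b(1)] rh0 f10 by simp
    have r1: "restr (\<lambda>m. d2 m = 1) h' = 0"
      unfolding h'_def restr_diff restr_scale[OF \<beta>(1)] restr_scale[OF b(1)] b(2) \<beta>(2)
      by (simp add: algebra_simps)
    have "h' = 0"
    proof (rule ccontr)
      assume ne: "h' \<noteq> 0"
      have "lo d2 h' \<le> 1" using le1[OF h'M ne] .
      then have "lo d2 h' = 0 \<or> lo d2 h' = 1" by auto
      then show False using restr_lo_ne[OF ne, of d2] r0 r1 by auto
    qed
    then have "(\<beta> * \<alpha>) * f = (\<beta> * a) * f0 + b * f1"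
      unfolding h'_def h_def by (simp add: algebra_simps)
    then show ?thesis using W0_mult[OF \<beta>(1) a(1)] b(1) by blast
  qed
  then show ?thesis using W0_mult[OF \<beta>(1) \<alpha>(1)] k0 by blast
qed

lemma caseX:
  fixes M N :: "('v, 'a::idom) mpoly set"
  assumes M: "Mod p M" and f0: "f0 \<in> M" "f0 \<noteq> 0" "lo d2 f0 = 0"
    and f1: "f1 \<in> M" "f1 \<noteq> 0" "lo d2 f1 = 1"
    and le1: "\<And>f. f \<in> M \<Longrightarrow> f \<noteq> 0 \<Longrightarrow> lo d2 f \<le> 1"
    and N: "Mod q N" and g0: "g0 \<in> N" "g0 \<noteq> 0" "lo d2 g0 = 0"
    and g1: "g1 \<in> N" "g1 \<noteq> 0" "lo d2 g1 = 1"
    and le1': "\<And>g. g \<in> N \<Longrightarrow> g \<noteq> 0 \<Longrightarrow> lo d2 g \<le> 1"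
    and gens: "\<And>t. t \<in> {0, 1, 2, 4, 6} \<Longrightarrow> mono (d - t) t \<in> SP M N"
  shows False
proof -
  obtain \<kappa>1 where k1: "W0 \<kappa>1" "\<kappa>1 \<noteq> 0" "\<forall>f\<in>M. \<exists>a b. W0 a \<and> W0 b \<and> \<kappa>1 * f = a * f0 + b * f1"
    using span2[OF M f0 f1 le1] by blast
  obtain \<kappa>2 where k2: "W0 \<kappa>2" "\<kappa>2 \<noteq> 0" "\<forall>g\<in>N. \<exists>a b. W0 a \<and> W0 b \<and> \<kappa>2 * g = a * g0 + b * g1"
    using span2[OF N g0 g1 le1'] by blast
  define \<kappa> where "\<kappa> = \<kappa>1 * \<kappa>2"
  have kW: "W0 \<kappa>" unfolding \<kappa>_def by (rule W0_mult[OF k1(1) k2(1)])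
  have k0: "\<kappa> \<noteq> 0" unfolding \<kappa>_def using mult_ne0[OF k1(2) k2(2)] .
  define Ps where "Ps = [f0 * g0, f0 * g1, f1 * g0, f1 * g1]"
  have prodin: "\<kappa> * (f * g) \<in> lspan Ps" if f: "f \<in> M" and g: "g \<in> N" for f g
  proof -
    obtain a b where ab: "W0 a" "W0 b" "\<kappa>1 * f = a * f0 + b * f1" using k1(3) f by blast
    obtain a' b' where ab': "W0 a'" "W0 b'" "\<kappa>2 * g = a' * g0 + b' * g1" using k2(3) g by blast
    have "\<kappa> * (f * g) = (\<kappa>1 * f) * (\<kappa>2 * g)" unfolding \<kappa>_def by (simp add: algebra_simps)
    also have "\<dots> = (a * a') * (f0 * g0) + ((a * b') * (f0 * g1) + ((b * a') * (f1 * g0) + ((b * b') * (f1 * g1) + 0)))"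
      unfolding ab(3) ab'(3) by (simp add: algebra_simps)
    finally show ?thesis unfolding Ps_def
      by (simp only:) (intro lspan_consI W0_mult ab ab' lspan_zero)
  qed
  have spin: "\<kappa> * e \<in> lspan Ps" if "e \<in> SP M N" for e
    using that
  proof (induction e rule: SP.induct)
    case SP0 then show ?case using lspan_zero by simp
  next
    case (SPs f g e)
    have "\<kappa> * (f * g + e) = \<kappa> * (f * g) + \<kappa> * e" by (simp add: algebra_simps)
    then show ?case using lspan_add[OF prodin[OF SPs(1,2)] SPs.IH] by simp
  qed
  have "card {0, 1, 2, 4, 6 :: nat} \<le> length Ps"
  proof (rule LC)
    show "finite {0, 1, 2, 4, 6 :: nat}" by simp
    show "\<forall>t\<in>{0, 1, 2, 4, 6}. \<exists>u\<in>lspan Ps. u \<noteq> 0 \<and> lo d2 u = t"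
    proof
      fix t :: nat assume t: "t \<in> {0, 1, 2, 4, 6}"
      have "\<kappa> * mono (d - t) t \<in> lspan Ps" by (rule spin[OF gens[OF t]])
      moreover have "\<kappa> * mono (d - t) t \<noteq> 0" using mult_ne0[OF k0 mono_ne0] .
      moreover have "lo d2 (\<kappa> * mono (d - t) t) = t" using lo_scale(1)[OF kW k0 mono_ne0] lo_d2_mono by simp
      ultimately show "\<exists>u\<in>lspan Ps. u \<noteq> 0 \<and> lo d2 u = t" by blast
    qed
  qed
  then show False unfolding Ps_def by simp
qed

lemma caseY:
  fixes M N :: "('v, 'a::idom) mpoly set"
  assumes M: "Mod p M" and N: "Mod q N"
    and good: "\<And>f g. f \<in> M \<Longrightarrow> g \<in> N \<Longrightarrow> GoodE E (f * g)"
    and E1: "\<And>t. t \<in> E \<Longrightarrow> t = 0 \<or> t = 1 \<or> even t"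
    and no1: "\<And>f. f \<in> M \<Longrightarrow> f \<noteq> 0 \<Longrightarrow> lo d2 f \<noteq> 1"
    and no1': "\<And>g. g \<in> N \<Longrightarrow> g \<noteq> 0 \<Longrightarrow> lo d2 g \<noteq> 1"
    and f': "f' \<in> M" "f' \<noteq> 0" "even (lo d2 f')" "2 \<le> lo d2 f'"
    and g': "g' \<in> N" "g' \<noteq> 0" "even (lo d2 g')" "2 \<le> lo d2 g'"
    and gen: "mono k 1 \<in> SP M N"
  shows False
proof -
  define l where "l = lo d2 f'"
  define l' where "l' = lo d2 g'"
  have notE: "t \<notin> E" if "odd t" "3 \<le> t" for t using E1 that by fastforce
  have z: "restr (\<lambda>m. d2 m = 1) (f * g) = 0" if f: "f \<in> M" and g: "g \<in> N" for f g
  proof (cases "f = 0 \<or> g = 0")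
    case True then show ?thesis by auto
  next
    case False
    then have fn: "f \<noteq> 0" and gn: "g \<noteq> 0" by auto
    show ?thesis
    proof (cases "lo d2 f = 0 \<and> lo d2 g = 0")
      case True
      define F0 where "F0 = restr (\<lambda>m. d2 m = 0) f"
      define F1 where "F1 = restr (\<lambda>m. d2 m = 0 + 1) f"
      define G0 where "G0 = restr (\<lambda>m. d2 m = 0) g"
      define G1 where "G1 = restr (\<lambda>m. d2 m = 0 + 1) g"
      define H0 where "H0 = restr (\<lambda>m. d2 m = l) f'"
      define H1 where "H1 = restr (\<lambda>m. d2 m = l + 1) f'"
      define K0 where "K0 = restr (\<lambda>m. d2 m = l') g'"
      define K1 where "K1 = restr (\<lambda>m. d2 m = l' + 1) g'"
      have x: "restr (\<lambda>m. d2 m = 0 + 0 + 1) (f * g) = F0 * G1 + F1 * G0"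
        unfolding F0_def F1_def G0_def G1_def by (rule G_lo1[OF add_d2]) auto
      have kf': "\<And>m. m \<in> keys f' \<Longrightarrow> l \<le> d2 m" unfolding l_def by (rule lo_le)
      have kg': "\<And>m. m \<in> keys g' \<Longrightarrow> l' \<le> d2 m" unfolding l'_def by (rule lo_le)
      have r1: "restr (\<lambda>m. d2 m = 0 + l' + 1) (f * g') = F0 * K1 + F1 * K0"
        unfolding F0_def F1_def K0_def K1_def by (rule G_lo1[OF add_d2]) (auto intro: kg')
      have r2: "restr (\<lambda>m. d2 m = l + 0 + 1) (f' * g) = H0 * G1 + H1 * G0"
        unfolding H0_def H1_def G0_def G1_def by (rule G_lo1[OF add_d2]) (auto intro: kf')
      have r3: "restr (\<lambda>m. d2 m = l + l' + 1) (f' * g') = H0 * K1 + H1 * K0"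
        unfolding H0_def H1_def K0_def K1_def by (rule G_lo1[OF add_d2]) (auto intro: kf' kg')
      have e1: "F0 * K1 + F1 * K0 = 0"
        using r1 good[OF f g'(1)] notE[of "0 + l' + 1"] g'(3,4) unfolding GoodE_def l'_def by auto
      have e2: "H0 * G1 + H1 * G0 = 0"
        using r2 good[OF f'(1) g] notE[of "l + 0 + 1"] f'(3,4) unfolding GoodE_def l_def by auto
      have e3: "H0 * K1 + H1 * K0 = 0"
        using r3 good[OF f'(1) g'(1)] notE[of "l + l' + 1"] f'(3,4) g'(3,4) unfolding GoodE_def l_def l'_def by auto
      have H0: "H0 \<noteq> 0" unfolding H0_def l_def by (rule restr_lo_ne[OF f'(2)])
      have K0: "K0 \<noteq> 0" unfolding K0_def l'_def by (rule restr_lo_ne[OF g'(2)])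
      have "H0 * K0 * (F0 * G1 + F1 * G0) =
          F0 * K0 * (H0 * G1 + H1 * G0) + H0 * G0 * (F0 * K1 + F1 * K0) - F0 * G0 * (H0 * K1 + H1 * K0)"
        by (simp add: algebra_simps)
      then have "H0 * K0 * (F0 * G1 + F1 * G0) = 0" using e1 e2 e3 by simp
      then have "F0 * G1 + F1 * G0 = 0" using mult_ne0[OF mult_ne0[OF H0 K0]] by blast
      then show ?thesis using x by simp
    next
      case False
      have "lo d2 f \<noteq> 1" "lo d2 g \<noteq> 1" using no1[OF f fn] no1'[OF g gn] .
      then have ge: "2 \<le> lo d2 f + lo d2 g" using False by auto
      show ?thesis
      proof (rule restr_none)
        fix m assume "m \<in> keys (f * g)"
        then have "lo d2 f + lo d2 g \<le> d2 m" by (rule kmw_ge[OF add_d2]) (auto intro: lo_le)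
        then show "\<not> d2 m = 1" using ge by simp
      qed
    qed
  qed
  have "restr (\<lambda>m. d2 m = 1) e = 0" if "e \<in> SP M N" for e
    using that
  proof (induction e rule: SP.induct)
    case SP0 then show ?case by simp
  next
    case (SPs f g e) then show ?case using z[OF SPs(1,2)] by (simp add: restr_add)
  qed
  from this[OF gen] have "(mono k 1 :: ('v, 'a) mpoly) = 0" by (simp add: restr_d2_mono)
  then show False using mono_ne0[of k 1] by blast
qed

end


context TV
begin

lemma setup_bc:
  fixes M N :: "('v, 'a::idom) mpoly set"
  assumes M: "Mod p M" and N: "Mod q N" and pq: "p + q = d" "1 \<le> p" "1 \<le> q"
    and e1: "mono d 0 \<in> SP M N" and e2: "mono 0 d \<in> SP M N"
  shows "\<exists>f0\<in>M. f0 \<noteq> 0 \<and> lo d2 f0 = 0" "\<exists>g0\<in>N. g0 \<noteq> 0 \<and> lo d2 g0 = 0"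
    "\<exists>f\<in>M. f \<noteq> 0 \<and> lo d2 f \<noteq> 0" "\<exists>g\<in>N. g \<noteq> 0 \<and> lo d2 g \<noteq> 0"
proof -
  have r: "restr (\<lambda>m. d2 m = 0) (mono d 0 :: ('v, 'a) mpoly) \<noteq> 0"
    using mono_ne0 by (simp add: restr_d2_mono)
  show f0: "\<exists>f0\<in>M. f0 \<noteq> 0 \<and> lo d2 f0 = 0" by (rule claimB[OF e1 r])
  show g0: "\<exists>g0\<in>N. g0 \<noteq> 0 \<and> lo d2 g0 = 0" by (rule claimB[OF SP_swap[OF e1] r])
  from f0 obtain f0 where "f0 \<in> M" "f0 \<noteq> 0" "lo d2 f0 = 0" by blast
  then show "\<exists>f\<in>M. f \<noteq> 0 \<and> lo d2 f \<noteq> 0" using rank2_bc[OF M N pq(1,2) e1 e2, of f0] by auto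
  from g0 obtain g0 where "g0 \<in> N" "g0 \<noteq> 0" "lo d2 g0 = 0" by blast
  moreover have "q + p = d" using pq by simp
  ultimately show "\<exists>g\<in>N. g \<noteq> 0 \<and> lo d2 g \<noteq> 0"
    using rank2_bc[OF N M _ pq(3) SP_swap[OF e1] SP_swap[OF e2], of g0] by auto
qed

lemma fam_b:
  fixes M N :: "('v, 'a::idom) mpoly set"
  assumes M: "Mod p M" and N: "Mod q N" and pq: "p + q = d" "1 \<le> p" "1 \<le> q"
    and good: "\<forall>f\<in>M. \<forall>g\<in>N. GoodE {0, d} (f * g)"
    and e1: "mono d 0 \<in> SP M N" and e2: "mono 0 d \<in> SP M N"
  shows False
proof -
  obtain g0 where g0: "g0 \<in> N" "g0 \<noteq> 0" "lo d2 g0 = 0" using setup_bc(2)[OF M N pq e1 e2] by blast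
  obtain f where f: "f \<in> M" "f \<noteq> 0" "lo d2 f \<noteq> 0" using setup_bc(3)[OF M N pq e1 e2] by blast
  have "lo d2 f + lo d2 g0 \<in> {0, d}" using GoodE_mem good f g0 by blast
  moreover have "lo d2 f \<le> p" using Form_lo_le(1)[OF Mod_Form[OF M f(1)] f(2)] .
  ultimately show False using f(3) g0(3) pq by auto
qed

lemma fam_odd:
  fixes M N :: "('v, 'a::idom) mpoly set"
  assumes M: "Mod p M" and N: "Mod q N" and pq: "p + q = d" "1 \<le> p" "1 \<le> q"
    and good: "\<forall>f\<in>M. \<forall>g\<in>N. GoodE E (f * g)"
    and E: "\<And>t. t \<in> E \<Longrightarrow> t = 0 \<or> odd t"
    and e1: "mono d 0 \<in> SP M N" and e2: "mono 0 d \<in> SP M N"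
  shows False
proof -
  obtain f0 where f0: "f0 \<in> M" "f0 \<noteq> 0" "lo d2 f0 = 0" using setup_bc(1)[OF M N pq e1 e2] by blast
  obtain g0 where g0: "g0 \<in> N" "g0 \<noteq> 0" "lo d2 g0 = 0" using setup_bc(2)[OF M N pq e1 e2] by blast
  obtain f where f: "f \<in> M" "f \<noteq> 0" "lo d2 f \<noteq> 0" using setup_bc(3)[OF M N pq e1 e2] by blast
  obtain g where g: "g \<in> N" "g \<noteq> 0" "lo d2 g \<noteq> 0" using setup_bc(4)[OF M N pq e1 e2] by blast
  have "lo d2 f + lo d2 g0 \<in> E" using GoodE_mem good f g0 by blast
  then have o1: "odd (lo d2 f)" using E f(3) g0(3) by fastforce
  have "lo d2 f0 + lo d2 g \<in> E" using GoodE_mem good f0 g by blast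
  then have o2: "odd (lo d2 g)" using E g(3) f0(3) by fastforce
  have "lo d2 f + lo d2 g \<in> E" using GoodE_mem good f g by blast
  then have "lo d2 f + lo d2 g = 0 \<or> odd (lo d2 f + lo d2 g)" using E by blast
  then show False using o1 o2 f(3) by auto
qed

lemma le1_lemma:
  fixes M N :: "('v, 'a::idom) mpoly set"
  assumes good: "\<forall>f\<in>M. \<forall>g\<in>N. GoodE E (f * g)"
    and E: "\<And>t. t \<in> E \<Longrightarrow> t = 0 \<or> t = 1 \<or> even t"
    and f0: "f0 \<in> M" "f0 \<noteq> 0" "lo d2 f0 = 0" and f1: "f1 \<in> M" "f1 \<noteq> 0" "lo d2 f1 = 1"
    and g: "g \<in> N" "g \<noteq> 0"
  shows "lo d2 g \<le> 1"
proof (rule ccontr)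
  assume "\<not> lo d2 g \<le> 1"
  then have ge: "2 \<le> lo d2 g" by simp
  have "lo d2 f0 + lo d2 g \<in> E" using GoodE_mem good f0 g by blast
  then have ev: "even (lo d2 g)" using E f0(3) ge by fastforce
  have "lo d2 f1 + lo d2 g \<in> E" using GoodE_mem good f1 g by blast
  then show False using E f1(3) ge ev by fastforce
qed

lemma fam_even:
  fixes M N :: "('v, 'a::idom) mpoly set"
  assumes M: "Mod p M" and N: "Mod q N" and pq: "p + q = d" "1 \<le> p" "1 \<le> q"
    and good: "\<forall>f\<in>M. \<forall>g\<in>N. GoodE E (f * g)"
    and E: "\<And>t. t \<in> E \<Longrightarrow> t = 0 \<or> t = 1 \<or> even t"
    and gens: "\<And>t. t \<in> {0, 1, 2, 4, 6} \<Longrightarrow> mono (d - t) t \<in> SP M N"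
    and e2: "mono 0 d \<in> SP M N"
  shows False
proof -
  have e1: "mono d 0 \<in> SP M N" using gens[of 0] by simp
  have good': "\<forall>g\<in>N. \<forall>f\<in>M. GoodE E (g * f)"
  proof (intro ballI)
    fix g f assume "g \<in> N" "f \<in> M"
    then have "GoodE E (f * g)" using good by blast
    then show "GoodE E (g * f)" by (simp add: mult.commute)
  qed
  have gens': "\<And>t. t \<in> {0, 1, 2, 4, 6} \<Longrightarrow> mono (d - t) t \<in> SP N M" using gens SP_swap by blast
  obtain f0 where f0: "f0 \<in> M" "f0 \<noteq> 0" "lo d2 f0 = 0" using setup_bc(1)[OF M N pq e1 e2] by blast
  obtain g0 where g0: "g0 \<in> N" "g0 \<noteq> 0" "lo d2 g0 = 0" using setup_bc(2)[OF M N pq e1 e2] by blast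
  obtain f where f: "f \<in> M" "f \<noteq> 0" "lo d2 f \<noteq> 0" using setup_bc(3)[OF M N pq e1 e2] by blast
  obtain g where g: "g \<in> N" "g \<noteq> 0" "lo d2 g \<noteq> 0" using setup_bc(4)[OF M N pq e1 e2] by blast
  show False
  proof (cases "\<exists>f1\<in>M. f1 \<noteq> 0 \<and> lo d2 f1 = 1")
    case True
    then obtain f1 where f1: "f1 \<in> M" "f1 \<noteq> 0" "lo d2 f1 = 1" by blast
    have leN: "\<And>h. h \<in> N \<Longrightarrow> h \<noteq> 0 \<Longrightarrow> lo d2 h \<le> 1" using le1_lemma[OF good E f0 f1] by blast
    have g1: "lo d2 g = 1" using leN[OF g(1,2)] g(3) by simp
    have leM: "\<And>h. h \<in> M \<Longrightarrow> h \<noteq> 0 \<Longrightarrow> lo d2 h \<le> 1"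
      using le1_lemma[OF good' E g0 g(1,2) g1] by blast
    show False by (rule caseX[OF M f0 f1 leM N g0 g(1,2) g1 leN gens])
  next
    case False1: False
    show False
    proof (cases "\<exists>g1\<in>N. g1 \<noteq> 0 \<and> lo d2 g1 = 1")
      case True
      then obtain g1 where g1: "g1 \<in> N" "g1 \<noteq> 0" "lo d2 g1 = 1" by blast
      have leM: "\<And>h. h \<in> M \<Longrightarrow> h \<noteq> 0 \<Longrightarrow> lo d2 h \<le> 1" using le1_lemma[OF good' E g0 g1] by blast
      have f1: "lo d2 f = 1" using leM[OF f(1,2)] f(3) by simp
      have leN: "\<And>h. h \<in> N \<Longrightarrow> h \<noteq> 0 \<Longrightarrow> lo d2 h \<le> 1"
        using le1_lemma[OF good E f0 f(1,2) f1] by blast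
      show False by (rule caseX[OF N g0 g1 leN M f0 f(1,2) f1 leM gens'])
    next
      case False
      have no1: "\<And>h. h \<in> M \<Longrightarrow> h \<noteq> 0 \<Longrightarrow> lo d2 h \<noteq> 1" using False1 by blast
      have no1': "\<And>h. h \<in> N \<Longrightarrow> h \<noteq> 0 \<Longrightarrow> lo d2 h \<noteq> 1" using False by blast
      have "lo d2 f + lo d2 g0 \<in> E" using GoodE_mem good f g0 by blast
      then have fe: "even (lo d2 f)" using E f(3) no1[OF f(1,2)] g0(3) by fastforce
      have "lo d2 f0 + lo d2 g \<in> E" using GoodE_mem good f0 g by blast
      then have ge: "even (lo d2 g)" using E g(3) no1'[OF g(1,2)] f0(3) by fastforce
      have f2: "2 \<le> lo d2 f" using fe f(3) by presburger
      have g2: "2 \<le> lo d2 g" using ge g(3) by presburger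
      show False
        by (rule caseY[OF M N _ E no1 no1' f(1,2) fe f2 g(1,2) ge g2 gens[of 1]]) (use good in auto)
    qed
  qed
qed

definition Good' :: "('v, 'a::comm_ring_1) mpoly \<Rightarrow> bool" where
  "Good' F \<longleftrightarrow> restr (\<lambda>m. d2 m = 0) F * mono 0 3 = restr (\<lambda>m. d2 m = 3) F * mono 3 0"

lemma Good'_zero: "Good' 0" unfolding Good'_def by simp
lemma Good'_add: "Good' F \<Longrightarrow> Good' F' \<Longrightarrow> Good' (F + F')"
  unfolding Good'_def by (simp add: restr_add algebra_simps)
lemma Good'_scale: "W0 s \<Longrightarrow> Good' F \<Longrightarrow> Good' (s * F)"
  unfolding Good'_def by (simp add: restr_scale mult.assoc)

lemma c'_core:
  fixes M N :: "('v, 'a::idom) mpoly set"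
  assumes M: "Mod 1 M" and N: "Mod 2 N"
    and good: "\<forall>f\<in>M. \<forall>g\<in>N. Good' (f * g)"
    and f0: "f0 \<in> M" "f0 \<noteq> 0" "lo d2 f0 = 0" and f1: "f1 \<in> M" "f1 \<noteq> 0" "lo d2 f1 = 1"
    and ga: "ga \<in> N" "ga \<noteq> 0" and gb: "gb \<in> N" "gb \<noteq> 0" "lo d2 ga \<noteq> lo d2 gb"
  shows False
proof -
  have mono_ne: "(mono a b :: ('v, 'a) mpoly) \<noteq> 0" for a b by (rule mono_ne0)
  have kf1: "d2 m = 1" if "m \<in> keys f1" for m
  proof -
    have "d2 m \<le> 1" using Form_d2_le[OF Mod_Form[OF M f1(1)] that] .
    moreover have "1 \<le> d2 m" using lo_le[OF that, of d2] f1(3) by simp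
    ultimately show ?thesis by simp
  qed
  have kf0: "d2 m \<le> 1" if "m \<in> keys f0" for m using Form_d2_le[OF Mod_Form[OF M f0(1)] that] .
  have all1: "lo d2 g = 1" if g: "g \<in> N" "g \<noteq> 0" for g
  proof -
    have z0: "restr (\<lambda>m. d2 m = 0) (f1 * g) = 0"
    proof (rule restr_none)
      fix m assume "m \<in> keys (f1 * g)"
      then have "1 + 0 \<le> d2 m" by (rule kmw_ge[OF add_d2]) (auto dest: kf1)
      then show "\<not> d2 m = 0" by simp
    qed
    have "restr (\<lambda>m. d2 m = 3) (f1 * g) * mono 3 0 = 0"
      using good f1(1) g(1) z0 unfolding Good'_def by force
    then have z3: "restr (\<lambda>m. d2 m = 3) (f1 * g) = 0" using mult_ne0[OF _ mono_ne] by blast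
    have "restr (\<lambda>m. d2 m = 1 + 2) (f1 * g) = f1 * restr (\<lambda>m. d2 m = 2) g"
      by (rule G_const[OF add_d2]) (rule kf1)
    moreover have n3: "(1::nat) + 2 = 3" by simp
    ultimately have "restr (\<lambda>m. d2 m = 3) (f1 * g) = f1 * restr (\<lambda>m. d2 m = 2) g" by (simp only: n3)
    then have "f1 * restr (\<lambda>m. d2 m = 2) g = 0" using z3 by simp
    then have g2: "restr (\<lambda>m. d2 m = 2) g = 0" using mult_ne0[OF f1(2)] by blast
    have kg: "d2 m \<le> 1" if "m \<in> keys g" for m
    proof -
      have "d2 m \<le> 2" using Form_d2_le[OF Mod_Form[OF N g(1)] that] .
      moreover have "d2 m \<noteq> 2" using restr_ne0[OF that, of "\<lambda>m. d2 m = 2"] g2 by auto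
      ultimately show ?thesis by simp
    qed
    have z3': "restr (\<lambda>m. d2 m = 3) (f0 * g) = 0"
    proof (rule restr_none)
      fix m assume "m \<in> keys (f0 * g)"
      then have "d2 m \<le> 1 + 1" by (rule kmw_le[OF add_d2]) (auto dest: kf0 kg)
      then show "\<not> d2 m = 3" by simp
    qed
    have "restr (\<lambda>m. d2 m = 0) (f0 * g) * mono 0 3 = 0"
      using good f0(1) g(1) z3' unfolding Good'_def by force
    then have "restr (\<lambda>m. d2 m = 0) (f0 * g) = 0" using mult_ne0[OF _ mono_ne] by blast
    moreover have "restr (\<lambda>m. d2 m = 0 + 0) (f0 * g) = restr (\<lambda>m. d2 m = 0) f0 * restr (\<lambda>m. d2 m = 0) g"
      by (rule G_lo[OF add_d2]) auto
    ultimately have "restr (\<lambda>m. d2 m = 0) f0 * restr (\<lambda>m. d2 m = 0) g = 0" by simp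
    moreover have "restr (\<lambda>m. d2 m = 0) f0 \<noteq> 0" using restr_lo_ne[OF f0(2), of d2] f0(3) by simp
    ultimately have g0: "restr (\<lambda>m. d2 m = 0) g = 0" using mult_ne0 by blast
    have "lo d2 g \<le> 2" using Form_lo_le(1)[OF Mod_Form[OF N g(1)] g(2)] .
    moreover have "restr (\<lambda>m. d2 m = lo d2 g) g \<noteq> 0" by (rule restr_lo_ne[OF g(2)])
    ultimately show ?thesis using g0 g2 by (cases "lo d2 g") (auto simp: numeral_2_eq_2 le_Suc_eq)
  qed
  show False using all1[OF ga] all1[OF gb(1,2)] gb(3) by simp
qed

lemma fam_c':
  fixes M N :: "('v, 'a::idom) mpoly set"
  assumes M: "Mod p M" and N: "Mod q N" and pq: "p + q = 3" "1 \<le> p" "1 \<le> q"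
    and good: "\<forall>f\<in>M. \<forall>g\<in>N. Good' (f * g)"
    and e1: "mono 2 1 \<in> SP M N" and e2: "mono 3 0 + mono 0 3 \<in> SP M N"
  shows False
proof -
  have r: "restr (\<lambda>m. d2 m = 0) (mono 3 0 + mono 0 3 :: ('v, 'a) mpoly) \<noteq> 0"
    using mono_ne0 by (simp add: restr_d2_mono restr_add)
  obtain f0 where f0: "f0 \<in> M" "f0 \<noteq> 0" "lo d2 f0 = 0" using claimB[OF e2 r] by blast
  obtain g0 where g0: "g0 \<in> N" "g0 \<noteq> 0" "lo d2 g0 = 0" using claimB[OF SP_swap[OF e2] r] by blast
  obtain f where f: "f \<in> M" "f \<noteq> 0" "lo d2 f \<noteq> lo d2 f0" using rank2_c'[OF M N pq(1,2) e1 e2 f0(1,2)] by blast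
  have qp: "q + p = 3" using pq by simp
  obtain g where g: "g \<in> N" "g \<noteq> 0" "lo d2 g \<noteq> lo d2 g0"
    using rank2_c'[OF N M qp pq(3) SP_swap[OF e1] SP_swap[OF e2] g0(1,2)] by blast
  have good': "\<forall>g\<in>N. \<forall>f\<in>M. Good' (g * f)"
  proof (intro ballI)
    fix g f assume "g \<in> N" "f \<in> M"
    then have "Good' (f * g)" using good by blast
    then show "Good' (g * f)" by (simp add: mult.commute)
  qed
  show False
  proof (cases "p = 1")
    case True
    then have q2: "q = 2" using pq by simp
    have "lo d2 f \<le> 1" using Form_lo_le(1)[OF Mod_Form[OF M f(1)] f(2)] True by simp
    then have f1: "lo d2 f = 1" using f(3) f0(3) by simp
    show False using c'_core[of M N f0 f g0 g] M N good f0 f f1 g0 g True q2 by simp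
  next
    case False
    then have p2: "p = 2" and q1: "q = 1" using pq by auto
    have "lo d2 g \<le> 1" using Form_lo_le(1)[OF Mod_Form[OF N g(1)] g(2)] q1 by simp
    then have g1: "lo d2 g = 1" using g(3) g0(3) by simp
    show False using c'_core[of N M g0 g f0 f] M N good' f0 f g1 g0 g p2 q1 by simp
  qed
qed

end


context TV
begin

lemma atom_generic:
  fixes G :: "('v, 'a::idom) mpoly set" and Good :: "('v, 'a) mpoly \<Rightarrow> bool"
  assumes d1: "1 \<le> d"
    and GF: "\<And>\<gamma>. \<gamma> \<in> G \<Longrightarrow> Form d \<gamma>" and GG: "\<And>\<gamma>. \<gamma> \<in> G \<Longrightarrow> Good \<gamma>"
    and Good0: "Good 0" and Goodadd: "\<And>F F'. Good F \<Longrightarrow> Good F' \<Longrightarrow> Good (F + F')"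
    and Goodsc: "\<And>s F. W0 s \<Longrightarrow> Good F \<Longrightarrow> Good (s * F)"
    and g0: "gz \<in> G" "restr (\<lambda>m. d2 m = 0) gz = mono d 0"
    and pw: "Var x1 ^ e \<in> ideal_gen G" "Var x2 ^ e \<in> ideal_gen G"
    and fam: "\<And>p q M N. 1 \<le> p \<Longrightarrow> 1 \<le> q \<Longrightarrow> p + q = d \<Longrightarrow> Mod p M \<Longrightarrow> Mod q N \<Longrightarrow>
        \<forall>f\<in>M. \<forall>g\<in>N. Good (f * g) \<Longrightarrow> G \<subseteq> SP M N \<Longrightarrow> False"
  shows "ideal_atom (ideal_gen G)"
proof -
  have g0ne: "gz \<noteq> 0" using g0(2) mono_ne0 by force
  have nz: "nz_ideal (ideal_gen G)"
    unfolding nz_ideal_def using ideal_gen_ideal ideal_gen_sub g0(1) g0ne by blast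
  define Qk where "Qk = {h :: ('v, 'a) mpoly. \<forall>m\<in>keys h. d \<le> wt m}"
  have Qki: "is_ideal Qk"
  proof (rule is_idealI)
    show "0 \<in> Qk" unfolding Qk_def by simp
  next
    fix a b assume a: "a \<in> Qk" and b: "b \<in> Qk"
    show "a + b \<in> Qk" unfolding Qk_def
    proof (rule CollectI, rule ballI)
      fix m assume "m \<in> keys (a + b)"
      then have "m \<in> keys a \<or> m \<in> keys b" by (rule keys_add_cases)
      then show "d \<le> wt m" using a b unfolding Qk_def by blast
    qed
  next
    fix r a assume a: "a \<in> Qk"
    show "r * a \<in> Qk" unfolding Qk_def
    proof (rule CollectI, rule ballI)
      fix m assume m: "m \<in> keys (r * a)"
      show "d \<le> wt m" using kmw_ge[OF add_wt m, of 0 d] a unfolding Qk_def by simp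
    qed
  qed
  have "G \<subseteq> Qk" using GF unfolding Qk_def Form_def by auto
  then have "ideal_gen G \<subseteq> Qk" by (rule ideal_gen_min[OF Qki])
  moreover have "(1 :: ('v, 'a) mpoly) \<notin> Qk" unfolding Qk_def using d1 by simp
  ultimately have nU: "ideal_gen G \<noteq> UNIV" by blast
  have at: "I = UNIV \<or> J = UNIV" if I: "nz_ideal I" and J: "nz_ideal J" and A: "ideal_gen G = ideal_mult I J"
    for I J :: "('v, 'a) mpoly set"
  proof (rule ccontr)
    assume "\<not> (I = UNIV \<or> J = UNIV)"
    then have "I \<noteq> UNIV" "J \<noteq> UNIV" by auto
    from reduction[OF GF GG Good0 Goodadd Goodsc g0 pw I this(1) J this(2) A]
    obtain p q M N where "1 \<le> p" "1 \<le> q" "p + q = d" "Mod p M" "Mod q N"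
      "\<forall>f\<in>M. \<forall>g\<in>N. Good (f * g)" "G \<subseteq> SP M N" by blast
    then show False by (rule fam)
  qed
  show ?thesis unfolding ideal_atom_def using nz nU at by blast
qed

lemma var1: "(Var x1 ^ a :: ('v, 'a::comm_ring_1) mpoly) = mono a 0"
  using var_mono[of a 0] by simp
lemma var2: "(Var x2 ^ b :: ('v, 'a::comm_ring_1) mpoly) = mono 0 b"
  using var_mono[of 0 b] by simp

lemma mono_mult: "(mono a b :: ('v, 'a::comm_ring_1) mpoly) * mono c e = mono (a + c) (b + e)"
  unfolding mono_def by (simp add: mult_single single_add ac_simps)

lemma GoodE_mono: "t \<in> E \<Longrightarrow> GoodE E (mono a t)"
  unfolding GoodE_def by (auto simp: restr_d2_mono)

lemma atom_b:
  assumes "1 \<le> i"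
  shows "ideal_atom (b_ideal i x1 x2 :: ('v, 'a::idom) mpoly set)"
  unfolding b_ideal_def
proof (rule atom_generic[where d = i and Good = "GoodE {0, i}" and gz = "Var x1 ^ i" and e = i])
  show "1 \<le> i" by (rule assms)
  show "\<And>\<gamma>. \<gamma> \<in> {Var x1 ^ i, Var x2 ^ i} \<Longrightarrow> Form i (\<gamma> :: ('v, 'a) mpoly)"
    using Form_mono[of i 0] Form_mono[of 0 i] by (auto simp: var1 var2)
  show "\<And>\<gamma>. \<gamma> \<in> {Var x1 ^ i, Var x2 ^ i} \<Longrightarrow> GoodE {0, i} (\<gamma> :: ('v, 'a) mpoly)"
    by (auto simp: var1 var2 intro: GoodE_mono)
  show "GoodE {0, i} (0 :: ('v, 'a) mpoly)" by (rule GoodE_zero)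
  show "\<And>F F'. GoodE {0, i} F \<Longrightarrow> GoodE {0, i} F' \<Longrightarrow> GoodE {0, i} (F + F')" by (rule GoodE_add)
  show "\<And>s F. W0 s \<Longrightarrow> GoodE {0, i} F \<Longrightarrow> GoodE {0, i} (s * F)" by (rule GoodE_scale)
  show "Var x1 ^ i \<in> {Var x1 ^ i, Var x2 ^ i :: ('v, 'a) mpoly}" by simp
  show "restr (\<lambda>m. d2 m = 0) (Var x1 ^ i) = (mono i 0 :: ('v, 'a) mpoly)" by (simp add: var1 restr_d2_mono)
  show "Var x1 ^ i \<in> ideal_gen {Var x1 ^ i, Var x2 ^ i :: ('v, 'a) mpoly}"
    "Var x2 ^ i \<in> ideal_gen {Var x1 ^ i, Var x2 ^ i :: ('v, 'a) mpoly}" using ideal_gen_sub by blast+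
next
  fix p q and M N :: "('v, 'a) mpoly set"
  assume "1 \<le> p" "1 \<le> q" "p + q = i" "Mod p M" "Mod q N" "\<forall>f\<in>M. \<forall>g\<in>N. GoodE {0, i} (f * g)"
    and S: "{Var x1 ^ i, Var x2 ^ i} \<subseteq> SP M N"
  moreover have "mono i 0 \<in> SP M N" "mono 0 i \<in> SP M N" using S by (auto simp: var1 var2)
  ultimately show False using fam_b by metis
qed

lemma atom_odd:
  assumes "1 \<le> i"
  shows "ideal_atom (c_odd_ideal i x1 x2 :: ('v, 'a::idom) mpoly set)"
proof -
  define d where "d = 2 * i + 1"
  define E where "E = {0, 1} \<union> {t. odd t \<and> t \<le> 2 * i + 1}"
  define G :: "('v, 'a) mpoly set" where "G = {Var x1 ^ (2*i+1-t) * Var x2 ^ t | t. t \<in> {0, 1} \<union> {t. odd t \<and> t \<le> 2*i+1}}"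
  have G: "G = {mono (d - t) t | t. t \<in> E}" unfolding G_def E_def d_def by (simp add: var_mono)
  have Ed: "t \<in> E \<Longrightarrow> t \<le> d" for t unfolding E_def d_def by auto
  have "ideal_atom (ideal_gen G)"
  proof (rule atom_generic[where d = d and Good = "GoodE E" and gz = "mono d 0" and e = d])
    show "1 \<le> d" unfolding d_def by simp
    show "\<And>\<gamma>. \<gamma> \<in> G \<Longrightarrow> Form d \<gamma>"
    proof -
      fix \<gamma> assume "\<gamma> \<in> G"
      then obtain t where t: "t \<in> E" "\<gamma> = mono (d - t) t" unfolding G by blast
      then show "Form d \<gamma>" using Form_mono[of "d - t" t] Ed[OF t(1)] by simp
    qed
    show "\<And>\<gamma>. \<gamma> \<in> G \<Longrightarrow> GoodE E \<gamma>" unfolding G using GoodE_mono by blast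
    show "GoodE E (0 :: ('v, 'a) mpoly)" by (rule GoodE_zero)
    show "\<And>F F'. GoodE E F \<Longrightarrow> GoodE E F' \<Longrightarrow> GoodE E (F + F')" by (rule GoodE_add)
    show "\<And>s F. W0 s \<Longrightarrow> GoodE E F \<Longrightarrow> GoodE E (s * F)" by (rule GoodE_scale)
    show g0: "mono d 0 \<in> G" unfolding G E_def by (rule CollectI, rule exI[of _ 0]) simp
    show "restr (\<lambda>m. d2 m = 0) (mono d 0) = (mono d 0 :: ('v, 'a) mpoly)" by (simp add: restr_d2_mono)
    have g1: "mono 0 d \<in> G" unfolding G E_def d_def by (rule CollectI, rule exI[of _ "2*i+1"]) simp
    show "Var x1 ^ d \<in> ideal_gen G" "Var x2 ^ d \<in> ideal_gen G"
      using ideal_gen_sub g0 g1 by (auto simp: var1 var2)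
  next
    fix p q and M N :: "('v, 'a) mpoly set"
    assume h: "1 \<le> p" "1 \<le> q" "p + q = d" "Mod p M" "Mod q N" "\<forall>f\<in>M. \<forall>g\<in>N. GoodE E (f * g)"
      and S: "G \<subseteq> SP M N"
    have "mono d 0 \<in> SP M N" using S unfolding G E_def by (auto intro!: exI[of _ 0])
    moreover have "mono 0 d \<in> SP M N" using S unfolding G E_def d_def by (force intro!: exI[of _ "2*i+1"])
    moreover have "\<And>t. t \<in> E \<Longrightarrow> t = 0 \<or> odd t" unfolding E_def by auto
    ultimately show False using fam_odd[OF h(4,5) h(3,1,2) h(6)] by blast
  qed
  then show ?thesis unfolding c_odd_ideal_def G_def .
qed

lemma atom_even:
  assumes "3 \<le> i"
  shows "ideal_atom (c_even_ideal i x1 x2 :: ('v, 'a::idom) mpoly set)"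
proof -
  define d where "d = 2 * i"
  define E where "E = {0, 1} \<union> {t. even t \<and> t \<le> 2 * i}"
  define G :: "('v, 'a) mpoly set" where "G = {Var x1 ^ (2*i-t) * Var x2 ^ t | t. t \<in> {0, 1} \<union> {t. even t \<and> t \<le> 2*i}}"
  have G: "G = {mono (d - t) t | t. t \<in> E}" unfolding G_def E_def d_def by (simp add: var_mono)
  have Ed: "t \<in> E \<Longrightarrow> t \<le> d" for t unfolding E_def d_def using assms by auto
  have inG: "mono (d - t) t \<in> G" if "t \<in> E" for t unfolding G using that by blast
  have "ideal_atom (ideal_gen G)"
  proof (rule atom_generic[where d = d and Good = "GoodE E" and gz = "mono d 0" and e = d])
    show "1 \<le> d" unfolding d_def using assms by simp
    show "\<And>\<gamma>. \<gamma> \<in> G \<Longrightarrow> Form d \<gamma>"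
    proof -
      fix \<gamma> assume "\<gamma> \<in> G"
      then obtain t where t: "t \<in> E" "\<gamma> = mono (d - t) t" unfolding G by blast
      then show "Form d \<gamma>" using Form_mono[of "d - t" t] Ed[OF t(1)] by simp
    qed
    show "\<And>\<gamma>. \<gamma> \<in> G \<Longrightarrow> GoodE E \<gamma>" unfolding G using GoodE_mono by blast
    show "GoodE E (0 :: ('v, 'a) mpoly)" by (rule GoodE_zero)
    show "\<And>F F'. GoodE E F \<Longrightarrow> GoodE E F' \<Longrightarrow> GoodE E (F + F')" by (rule GoodE_add)
    show "\<And>s F. W0 s \<Longrightarrow> GoodE E F \<Longrightarrow> GoodE E (s * F)" by (rule GoodE_scale)
    show g0: "mono d 0 \<in> G" using inG[of 0] unfolding E_def by simp
    show "restr (\<lambda>m. d2 m = 0) (mono d 0) = (mono d 0 :: ('v, 'a) mpoly)" by (simp add: restr_d2_mono)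
    have g1: "mono 0 d \<in> G" using inG[of d] unfolding E_def d_def by simp
    show "Var x1 ^ d \<in> ideal_gen G" "Var x2 ^ d \<in> ideal_gen G"
      using ideal_gen_sub g0 g1 by (auto simp: var1 var2)
  next
    fix p q and M N :: "('v, 'a) mpoly set"
    assume h: "1 \<le> p" "1 \<le> q" "p + q = d" "Mod p M" "Mod q N" "\<forall>f\<in>M. \<forall>g\<in>N. GoodE E (f * g)"
      and S: "G \<subseteq> SP M N"
    have gens: "mono (d - t) t \<in> SP M N" if "t \<in> {0, 1, 2, 4, 6}" for t
    proof -
      have "t \<in> E" using that assms unfolding E_def by auto
      then show ?thesis using inG S by blast
    qed
    have "mono 0 d \<in> SP M N" using inG[of d] S unfolding E_def d_def by auto
    moreover have "\<And>t. t \<in> E \<Longrightarrow> t = 0 \<or> t = 1 \<or> even t" unfolding E_def by auto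
    ultimately show False using fam_even[OF h(4,5) h(3,1,2) h(6) _ gens] by blast
  qed
  then show ?thesis unfolding c_even_ideal_def G_def .
qed

lemma atom_c':
  shows "ideal_atom (c'_ideal x1 x2 :: ('v, 'a::idom) mpoly set)"
proof -
  define G :: "('v, 'a) mpoly set" where "G = {Var x1 ^ 3 + Var x2 ^ 3, Var x1 ^ 2 * Var x2, Var x1 * Var x2 ^ 2}"
  have v1: "(Var x1 :: ('v, 'a) mpoly) = mono 1 0" using var1[of 1] by simp
  have v2: "(Var x2 :: ('v, 'a) mpoly) = mono 0 1" using var2[of 1] by simp
  have w1: "(Var x1 ^ 2 * Var x2 :: ('v, 'a) mpoly) = mono 2 1" using var_mono[of 2 1] by simp
  have w2: "(Var x1 * Var x2 ^ 2 :: ('v, 'a) mpoly) = mono 1 2" using var_mono[of 1 2] by simp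
  have w3: "(Var x1 ^ 3 + Var x2 ^ 3 :: ('v, 'a) mpoly) = mono 3 0 + mono 0 3" by (simp only: var1 var2)
  have G: "G = {mono 3 0 + mono 0 3, mono 2 1, mono 1 2}"
    unfolding G_def by (simp only: w1 w2 w3)
  have "ideal_atom (ideal_gen G)"
  proof (rule atom_generic[where d = 3 and Good = Good' and gz = "mono 3 0 + mono 0 3" and e = 4])
    show "1 \<le> (3::nat)" by simp
    show "\<And>\<gamma>. \<gamma> \<in> G \<Longrightarrow> Form 3 \<gamma>"
    proof -
      have n1: "(1::nat) + 2 = 3" "(2::nat) + 1 = 3" "(3::nat) + 0 = 3" "(0::nat) + 3 = 3" by simp_all
      have "Form 3 (mono 3 0 :: ('v, 'a) mpoly)" using Form_mono[of 3 0] unfolding n1 .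
      moreover have "Form 3 (mono 0 3 :: ('v, 'a) mpoly)" using Form_mono[of 0 3] unfolding n1 .
      moreover have "Form 3 (mono 2 1 :: ('v, 'a) mpoly)" using Form_mono[of 2 1] unfolding n1 .
      moreover have "Form 3 (mono 1 2 :: ('v, 'a) mpoly)" using Form_mono[of 1 2] unfolding n1 .
      ultimately show "\<And>\<gamma>. \<gamma> \<in> G \<Longrightarrow> Form 3 \<gamma>" unfolding G by (auto intro: Form_add)
    qed
    show "\<And>\<gamma>. \<gamma> \<in> G \<Longrightarrow> Good' \<gamma>"
      unfolding G Good'_def by (auto simp: restr_add restr_d2_mono mono_mult)
    show "Good' (0 :: ('v, 'a) mpoly)" by (rule Good'_zero)
    show "\<And>F F'. Good' F \<Longrightarrow> Good' F' \<Longrightarrow> Good' (F + F')" by (rule Good'_add)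
    show "\<And>s F. W0 s \<Longrightarrow> Good' F \<Longrightarrow> Good' (s * F)" by (rule Good'_scale)
    show "mono 3 0 + mono 0 3 \<in> G" unfolding G by simp
    show "restr (\<lambda>m. d2 m = 0) (mono 3 0 + mono 0 3) = (mono 3 0 :: ('v, 'a) mpoly)"
      by (simp add: restr_add restr_d2_mono)
    have gs: "mono 3 0 + mono 0 3 \<in> ideal_gen G" "mono 2 1 \<in> ideal_gen G" "mono 1 2 \<in> ideal_gen G"
      by (rule subsetD[OF ideal_gen_sub], simp add: G)+
    have i: "is_ideal (ideal_gen G)" by (rule ideal_gen_ideal)
    have "mono 1 0 * (mono 3 0 + mono 0 3) - mono 0 1 * mono 1 2 \<in> ideal_gen G"
      by (rule ideal_diff[OF i ideal_mult_l[OF i gs(1)] ideal_mult_l[OF i gs(3)]])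
    moreover have "mono 1 0 * (mono 3 0 + mono 0 3) - mono 0 1 * mono 1 2 = (mono 4 0 :: ('v, 'a) mpoly)"
    proof -
      have n: "(1::nat) + 3 = 4" "(0::nat) + 0 = 0" "(1::nat) + 0 = 1" "(0::nat) + 3 = 3" "(0::nat) + 1 = 1" "(1::nat) + 2 = 3"
        by simp_all
      have m1: "mono 1 0 * mono 3 0 = (mono 4 0 :: ('v, 'a) mpoly)" using mono_mult[of 1 0 3 0] unfolding n .
      have m2: "mono 1 0 * mono 0 3 = (mono 1 3 :: ('v, 'a) mpoly)" using mono_mult[of 1 0 0 3] unfolding n .
      have m3: "mono 0 1 * mono 1 2 = (mono 1 3 :: ('v, 'a) mpoly)" using mono_mult[of 0 1 1 2] unfolding n .
      have "mono 1 0 * (mono 3 0 + mono 0 3) - mono 0 1 * mono 1 2 =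
          mono 1 0 * mono 3 0 + (mono 1 0 * mono 0 3 - mono 0 1 * (mono 1 2 :: ('v, 'a) mpoly))"
        by (simp add: algebra_simps)
      also have "\<dots> = mono 4 0" unfolding m1 m2 m3 by simp
      finally show ?thesis .
    qed
    ultimately show "Var x1 ^ 4 \<in> ideal_gen G" by (simp add: var1)
    have "mono 0 1 * (mono 3 0 + mono 0 3) - mono 1 0 * mono 2 1 \<in> ideal_gen G"
      by (rule ideal_diff[OF i ideal_mult_l[OF i gs(1)] ideal_mult_l[OF i gs(2)]])
    moreover have "mono 0 1 * (mono 3 0 + mono 0 3) - mono 1 0 * mono 2 1 = (mono 0 4 :: ('v, 'a) mpoly)"
    proof -
      have n: "(0::nat) + 3 = 3" "(1::nat) + 0 = 1" "(0::nat) + 0 = 0" "(1::nat) + 3 = 4" "(1::nat) + 2 = 3" "(0::nat) + 1 = 1"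
        by simp_all
      have m1: "mono 0 1 * mono 3 0 = (mono 3 1 :: ('v, 'a) mpoly)" using mono_mult[of 0 1 3 0] unfolding n .
      have m2: "mono 0 1 * mono 0 3 = (mono 0 4 :: ('v, 'a) mpoly)" using mono_mult[of 0 1 0 3] unfolding n .
      have m3: "mono 1 0 * mono 2 1 = (mono 3 1 :: ('v, 'a) mpoly)" using mono_mult[of 1 0 2 1] unfolding n .
      have "mono 0 1 * (mono 3 0 + mono 0 3) - mono 1 0 * mono 2 1 =
          mono 0 1 * mono 0 3 + (mono 0 1 * mono 3 0 - mono 1 0 * (mono 2 1 :: ('v, 'a) mpoly))"
        by (simp add: algebra_simps)
      also have "\<dots> = mono 0 4" unfolding m1 m2 m3 by simp
      finally show ?thesis .
    qed
    ultimately show "Var x2 ^ 4 \<in> ideal_gen G" by (simp add: var2)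
  next
    fix p q and M N :: "('v, 'a) mpoly set"
    assume h: "1 \<le> p" "1 \<le> q" "p + q = 3" "Mod p M" "Mod q N" "\<forall>f\<in>M. \<forall>g\<in>N. Good' (f * g)"
      and S: "G \<subseteq> SP M N"
    have "mono 2 1 \<in> SP M N" "mono 3 0 + mono 0 3 \<in> SP M N" using S unfolding G by auto
    then show False using fam_c'[OF h(4,5) h(3,1,2) h(6)] by blast
  qed
  then show ?thesis unfolding c'_ideal_def G_def .
qed

end

theorem proposition5p10:
  fixes x1 x2 :: "'v::finite"
  assumes "CARD('v) \<ge> 2"
    and "x1 \<noteq> x2"
    and "ideal_BF TYPE(('v, 'a::idom) mpoly)"
  shows "(\<forall>i\<ge>1. ideal_atom (b_ideal i x1 x2 :: ('v,'a) mpoly set))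
       \<and> (\<forall>i\<ge>1. ideal_atom (c_odd_ideal i x1 x2 :: ('v,'a) mpoly set))
       \<and> (\<forall>i\<ge>3. ideal_atom (c_even_ideal i x1 x2 :: ('v,'a) mpoly set))
       \<and> ideal_atom (c'_ideal x1 x2 :: ('v,'a) mpoly set)"
proof -
  interpret TV x1 x2 by unfold_locales (rule assms(2))
  show ?thesis using atom_b atom_odd atom_even atom_c' by blast
qed


end
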